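(* Assume $A\cap B=\emptyset$, $C\ne[m]$ and $|A|\ge2$. (a) If $q\ge3$, or $q=2$ and $|[m]\setminus C|\ge2$, then $\mathcal C_{\overline{\mathcal N}_4}$ is a $q$-ary $\left[\frac{2(q^m-q^{|C|})(q^{|A|}-1)q^{|B|}}{q-1},\ m+2|A|+|B|,\ (q^m-q^{|C|})q^{|A|+|B|-1}\right]$ locally repairable code with locality $2$. (b) If $q=2$ and $|[m]\setminus C|=1$, then $\mathcal C_{\overline{\mathcal N}_4}$ is a binary $\left[(2^{|A|}-1)2^{m+|B|},\ m+2|A|+|B|,\ 2^{m+|A|+|B|-2}\right]$ locally repairable code with locality $3$.
   Context: $q$ is a prime power, $\mathbb F_q$ the field of order $q$, $\mathbb F_q^*=\mathbb F_q\setminus\{0\}$, $m\ge2$, $[m]=\{1,\dots,m\}$, $\mathrm{supp}(v)=\{i:v_i\ne0\}$. For nonempty $P\subseteq[m]$, $\Delta_P=\{v\in\mathbb F_q^m:\mathrm{supp}(v)\subseteq P\}$, $\Delta_P^c=\mathbb F_q^m\setminus\Delta_P$, $\Delta_P^*=\Delta_P\setminus\{\mathbf 0\}$. $A,B,C$ are nonempty subsets of $[m]$. Let $\mathcal N_4=\{(w_2+\omega,w_3,w_1)\in\mathbb F_q^{3m}: w_1\in\Delta_A^*,\ w_2\in\Delta_B,\ w_3\in\Delta_C^c,\ \omega\in\{\mathbf 0,w_1\}\}$ (closed under multiplication by $\mathbb F_q^*$), let $\overline{\mathcal N}_4$ contain exactly one element of each class $\{\alpha x:\alpha\in\mathbb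 F_q^*\}$, $x\in\mathcal N_4$, let $G$ be the $3m\times|\overline{\mathcal N}_4|$ matrix whose columns are the elements of $\overline{\mathcal N}_4$, and let $\mathcal C_{\overline{\mathcal N}_4}$ be its row span over $\mathbb F_q$. The code has locality $r$ (with respect to $G$) if $r$ is the least positive integer such that every column of $G$ is an $\mathbb F_q$-linear combination of at most $r$ other columns of $G$; a $q$-ary $[n,k,d]$ locally repairable code with locality $r$ is a linear $[n,k,d]$ code with locality $r$. *)

theory Defs
  imports Main "HOL.Vector_Spaces" "HOL-Library.Function_Algebras"
begin

text \<open>Vectors of F_q^m are functions nat => 'a vanishing outside {1..m}.
  Points of F_q^{3m} are triples of such vectors.\<close>

type_synonym 'a vec3 = "(nat \<Rightarrow> 'a) \<times> (nat \<Rightarrow> 'a) \<times> (nat \<Rightarrow> 'a)"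

definition fvec :: "nat \<Rightarrow> (nat \<Rightarrow> 'a::zero) set" where
  "fvec m = {v. \<forall>i. i \<notin> {1..m} \<longrightarrow> v i = 0}"

definition supp :: "(nat \<Rightarrow> 'a::zero) \<Rightarrow> nat set" where
  "supp v = {i. v i \<noteq> 0}"

definition Delta :: "nat \<Rightarrow> nat set \<Rightarrow> (nat \<Rightarrow> 'a::zero) set" where
  "Delta m P = {v \<in> fvec m. supp v \<subseteq> P}"

definition Delta_c :: "nat \<Rightarrow> nat set \<Rightarrow> (nat \<Rightarrow> 'a::zero) set" where
  "Delta_c m P = fvec m - Delta m P"

definition Delta_star :: "nat \<Rightarrow> nat set \<Rightarrow> (nat \<Rightarrow> 'a::zero) set" where
  "Delta_star m P = Delta m P - {(\<lambda>_. 0)}"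

definition N4 :: "nat \<Rightarrow> nat set \<Rightarrow> nat set \<Rightarrow> nat set \<Rightarrow> ('a::ring_1) vec3 set" where
  "N4 m A B C = {((\<lambda>i. w2 i + \<omega> i), w3, w1) | w1 w2 w3 \<omega>.
      w1 \<in> Delta_star m A \<and> w2 \<in> Delta m B \<and> w3 \<in> Delta_c m C \<and> \<omega> \<in> {(\<lambda>_. 0), w1}}"

definition smult3 :: "'a::ring_1 \<Rightarrow> 'a vec3 \<Rightarrow> 'a vec3" where
  "smult3 c x = ((\<lambda>i. c * fst x i), (\<lambda>i. c * fst (snd x) i), (\<lambda>i. c * snd (snd x) i))"

definition is_projective_rep :: "('a::field) vec3 set \<Rightarrow> 'a vec3 set \<Rightarrow> bool" where
  "is_projective_rep N Nbar \<longleftrightarrow> Nbar \<subseteq> N \<and>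
     (\<forall>x\<in>N. \<exists>!y. y \<in> Nbar \<and> (\<exists>\<alpha>. \<alpha> \<noteq> 0 \<and> y = smult3 \<alpha> x))"

definition dot3 :: "nat \<Rightarrow> ('a::comm_ring_1) vec3 \<Rightarrow> 'a vec3 \<Rightarrow> 'a" where
  "dot3 m x g = (\<Sum>i\<in>{1..m}. fst x i * fst g i + fst (snd x) i * fst (snd g) i
                              + snd (snd x) i * snd (snd g) i)"

text \<open>Row span of the generator matrix G whose columns are the elements of Nbar:
  the codewords x^T G, indexed by the columns (zero outside Nbar).\<close>
definition code :: "nat \<Rightarrow> ('a::comm_ring_1) vec3 set \<Rightarrow> ('a vec3 \<Rightarrow> 'a) set" where
  "code m Nbar = {(\<lambda>g. if g \<in> Nbar then dot3 m x g else 0) | x. x \<in> fvec m \<times> fvec m \<times> fvec m}"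

definition code_length :: "('a::zero) vec3 set \<Rightarrow> nat" where
  "code_length Nbar = card Nbar"

definition fscale :: "'a::field \<Rightarrow> ('b \<Rightarrow> 'a) \<Rightarrow> ('b \<Rightarrow> 'a)" where
  "fscale c f = (\<lambda>x. c * f x)"

lemma vector_space_fscale: "vector_space fscale"
  by unfold_locales (auto simp: fscale_def algebra_simps fun_eq_iff)

definition code_dim :: "('b \<Rightarrow> 'a::field) set \<Rightarrow> nat" where
  "code_dim Cd = vector_space.dim fscale Cd"

definition hdist :: "'b set \<Rightarrow> ('b \<Rightarrow> 'a) \<Rightarrow> ('b \<Rightarrow> 'a) \<Rightarrow> nat" where
  "hdist I c c' = card {g \<in> I. c g \<noteq> c' g}"

definition min_dist :: "'b set \<Rightarrow> ('b \<Rightarrow> 'a) set \<Rightarrow> nat" where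
  "min_dist I Cd = Min {hdist I c c' | c c'. c \<in> Cd \<and> c' \<in> Cd \<and> c \<noteq> c'}"

definition lin_comb3 :: "('a::ring_1) vec3 set \<Rightarrow> 'a vec3 \<Rightarrow> bool" where
  "lin_comb3 S g \<longleftrightarrow> (\<exists>c. g = ((\<lambda>i. \<Sum>s\<in>S. c s * fst s i),
                                (\<lambda>i. \<Sum>s\<in>S. c s * fst (snd s) i),
                                (\<lambda>i. \<Sum>s\<in>S. c s * snd (snd s) i)))"

definition repairable_with :: "('a::ring_1) vec3 set \<Rightarrow> nat \<Rightarrow> bool" where
  "repairable_with Nbar r \<longleftrightarrow>
     (\<forall>g\<in>Nbar. \<exists>S. S \<subseteq> Nbar - {g} \<and> card S \<le> r \<and> lin_comb3 S g)"

definition has_locality :: "('a::ring_1) vec3 set \<Rightarrow> nat \<Rightarrow> bool" where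
  "has_locality Nbar r \<longleftrightarrow> r > 0 \<and> repairable_with Nbar r \<and>
     (\<forall>r'. 0 < r' \<and> r' < r \<longrightarrow> \<not> repairable_with Nbar r')"

end

theory Submission
  imports Defs "HOL-Library.FuncSet"
begin

definition dotv :: "nat \<Rightarrow> (nat \<Rightarrow> 'a::comm_ring_1) \<Rightarrow> (nat \<Rightarrow> 'a) \<Rightarrow> 'a" where
  "dotv m a v = (\<Sum>i\<in>{1..m}. a i * v i)"

lemma Delta_alt: "P \<subseteq> {1..m} \<Longrightarrow> Delta m P = {v. \<forall>i. i \<notin> P \<longrightarrow> v i = 0}"
  unfolding Delta_def fvec_def supp_def by auto

lemma fvec_Delta: "fvec m = Delta m {1..m}"
  unfolding Delta_def fvec_def supp_def by auto

lemma bij_Delta_PiE: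
  "bij_betw (\<lambda>v. restrict v P) {v. \<forall>i. i \<notin> P \<longrightarrow> v i = (0::'a::zero)} (PiE P (\<lambda>_. UNIV))"
proof (rule bij_betw_imageI)
  show "inj_on (\<lambda>v. restrict v P) {v. \<forall>i. i \<notin> P \<longrightarrow> v i = (0::'a)}"
  proof (rule inj_onI)
    fix v w
    assume v: "v \<in> {v. \<forall>i. i \<notin> P \<longrightarrow> v i = (0::'a)}" and w: "w \<in> {v. \<forall>i. i \<notin> P \<longrightarrow> v i = (0::'a)}"
      and e: "restrict v P = restrict w P"
    show "v = w"
    proof
      fix i show "v i = w i"
      proof (cases "i \<in> P")
        case True then show ?thesis using fun_cong[OF e, of i] by simp
      next
        case False then show ?thesis using v w by simp
      qed
    qed
  qed
  show "(\<lambda>v. restrict v P) ` {v. \<forall>i. i \<notin> P \<longrightarrow> v i = (0::'a)} = PiE P (\<lambda>_. (UNIV::'a set))"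
  proof
    show "PiE P (\<lambda>_. UNIV) \<subseteq> (\<lambda>v. restrict v P) ` {v. \<forall>i. i \<notin> P \<longrightarrow> v i = (0::'a)}"
    proof
      fix f assume f: "f \<in> PiE P (\<lambda>_. (UNIV::'a set))"
      have "f = restrict (\<lambda>i. if i \<in> P then f i else 0) P"
        using f by (auto simp: restrict_def PiE_def extensional_def)
      thus "f \<in> (\<lambda>v. restrict v P) ` {v. \<forall>i. i \<notin> P \<longrightarrow> v i = (0::'a)}" by force
    qed
  next
    show "(\<lambda>v. restrict v P) ` {v. \<forall>i. i \<notin> P \<longrightarrow> v i = (0::'a)} \<subseteq> PiE P (\<lambda>_. (UNIV::'a set))"
      by (auto simp: PiE_def)
  qed
qed

lemma card_Delta:
  assumes "P \<subseteq> {1..m}"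
  shows "card (Delta m P :: (nat \<Rightarrow> 'a::{finite,zero}) set) = card (UNIV::'a set) ^ card P"
proof -
  have fP: "finite P" using assms finite_subset by blast
  have "card (Delta m P :: (nat \<Rightarrow> 'a) set) = card (PiE P (\<lambda>_. (UNIV::'a set)))"
    unfolding Delta_alt[OF assms] by (rule bij_betw_same_card[OF bij_Delta_PiE])
  also have "\<dots> = card (UNIV::'a set) ^ card P" using fP by (simp add: card_PiE)
  finally show ?thesis .
qed

lemma finite_Delta:
  assumes "P \<subseteq> {1..m}"
  shows "finite (Delta m P :: (nat \<Rightarrow> 'a::{finite,zero}) set)"
proof -
  have fP: "finite P" using assms finite_subset by blast
  have "finite (PiE P (\<lambda>_. (UNIV::'a set)))" using fP by (simp add: finite_PiE)
  thus ?thesis unfolding Delta_alt[OF assms]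
    using bij_betw_finite[OF bij_Delta_PiE] by blast
qed

lemma sum_ind: "finite S \<Longrightarrow> (\<Sum>x\<in>S. if Q x then 1 else 0 :: nat) = card {x\<in>S. Q x}"
  by (simp add: sum.inter_filter[symmetric])

lemma dotv_upd:
  assumes "i \<in> {1..m}"
  shows "dotv m a (v(i:=t)) = dotv m a v + a i * (t - v i)"
proof -
  have "\<And>j. a j * (v(i:=t)) j = a j * v j + (if j = i then a i * (t - v i) else 0)"
    by (simp add: algebra_simps)
  hence "dotv m a (v(i:=t)) = (\<Sum>j\<in>{1..m}. a j * v j + (if j = i then a i * (t - v i) else 0))"
    unfolding dotv_def by simp
  also have "\<dots> = dotv m a v + (\<Sum>j\<in>{1..m}. if j = i then a i * (t - v i) else 0)"
    unfolding dotv_def by (rule sum.distrib)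
  also have "(\<Sum>j\<in>{1..m}. if j = i then a i * (t - v i) else 0) = a i * (t - v i)"
    using assms by simp
  finally show ?thesis .
qed

lemma dotv_Delta:
  assumes "P \<subseteq> {1..m}" "v \<in> Delta m P"
  shows "dotv m a v = (\<Sum>i\<in>P. a i * v i)"
  unfolding dotv_def
  by (rule sum.mono_neutral_right) (use assms in \<open>auto simp: Delta_alt\<close>)

lemma dotv_Delta_zero:
  assumes "P \<subseteq> {1..m}" "v \<in> Delta m P" "\<forall>i\<in>P. a i = 0"
  shows "dotv m a v = 0"
  using dotv_Delta[OF assms(1,2), of a] assms(3) by simp

lemma card_zero_set:
  fixes a :: "nat \<Rightarrow> 'a::{finite,field}"
  assumes P: "P \<subseteq> {1..m}" and i: "i \<in> P" and ai: "a i \<noteq> 0"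
  shows "card {v\<in>Delta m P. dotv m a v + k = 0} = card (UNIV::'a set) ^ (card P - 1)"
proof -
  have im: "i \<in> {1..m}" using P i by auto
  have P': "P - {i} \<subseteq> {1..m}" using P by auto
  have "bij_betw (\<lambda>v. v(i:=0)) {v\<in>Delta m P. dotv m a v + k = 0} (Delta m (P-{i}))"
  proof (rule bij_betw_imageI)
    show "inj_on (\<lambda>v. v(i:=0)) {v\<in>Delta m P. dotv m a v + k = 0}"
    proof (rule inj_onI)
      fix v w assume v: "v \<in> {v\<in>Delta m P. dotv m a v + k = 0}"
        and w: "w \<in> {v\<in>Delta m P. dotv m a v + k = 0}" and e: "v(i:=0) = w(i:=0)"
      have "dotv m a (v(i:=0)) = dotv m a v - a i * v i" using dotv_upd[OF im, of a v 0] by (simp add: algebra_simps)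
      moreover have "dotv m a (w(i:=0)) = dotv m a w - a i * w i" using dotv_upd[OF im, of a w 0] by (simp add: algebra_simps)
      moreover have "dotv m a v = dotv m a w" using v w by (simp add: eq_neg_iff_add_eq_0[symmetric])
      ultimately have "a i * v i = a i * w i" using e by (metis diff_left_imp_eq)
      hence "v i = w i" using ai by simp
      thus "v = w" using e by (metis fun_upd_triv fun_upd_upd)
    qed
    show "(\<lambda>v. v(i:=0)) ` {v\<in>Delta m P. dotv m a v + k = 0} = Delta m (P-{i})"
    proof
      show "(\<lambda>v. v(i:=0)) ` {v\<in>Delta m P. dotv m a v + k = 0} \<subseteq> Delta m (P-{i})"
        using P P' by (auto simp: Delta_alt)
      show "(Delta m (P-{i}) :: (nat \<Rightarrow> 'a) set) \<subseteq> (\<lambda>v. v(i:=0)) ` {v\<in>Delta m P. dotv m a v + k = 0}"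
      proof
        fix w :: "nat \<Rightarrow> 'a" assume w: "w \<in> Delta m (P-{i})"
        have wi: "w i = 0" using w P' by (simp add: Delta_alt)
        define t where "t = - (k + dotv m a w) / a i"
        have "w(i:=t) \<in> Delta m P" using w P P' i by (auto simp: Delta_alt)
        moreover have "dotv m a (w(i:=t)) + k = 0"
          using dotv_upd[OF im, of a w t] wi ai by (simp add: t_def field_simps)
        moreover have "w = (w(i:=t))(i:=0)" using wi by auto
        ultimately show "w \<in> (\<lambda>v. v(i:=0)) ` {v\<in>Delta m P. dotv m a v + k = 0}" by blast
      qed
    qed
  qed
  hence "card {v\<in>Delta m P. dotv m a v + k = 0} = card (Delta m (P-{i}) :: (nat \<Rightarrow> 'a) set)"
    by (rule bij_betw_same_card)
  also have "\<dots> = card (UNIV::'a set) ^ (card P - 1)"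
    using card_Delta[OF P'] i P finite_subset[OF P] by simp
  finally show ?thesis .
qed

lemma card_nonzero_set:
  fixes a :: "nat \<Rightarrow> 'a::{finite,field}"
  assumes P: "P \<subseteq> {1..m}" and i: "i \<in> P" and ai: "a i \<noteq> 0"
  shows "card {v\<in>Delta m P. dotv m a v + k \<noteq> 0} = card (UNIV::'a set) ^ card P - card (UNIV::'a set) ^ (card P - 1)"
proof -
  have "{v\<in>Delta m P. dotv m a v + k \<noteq> 0} = Delta m P - {v\<in>Delta m P. dotv m a v + k = 0}" by auto
  hence "card {v\<in>Delta m P. dotv m a v + k \<noteq> 0} = card (Delta m P - {v\<in>Delta m P. dotv m a v + k = 0})"
    by simp
  also have "\<dots> = card (Delta m P :: (nat \<Rightarrow> 'a) set) - card {v\<in>Delta m P. dotv m a v + k = 0}"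
    by (rule card_Diff_subset) (auto intro: finite_subset[OF _ finite_Delta[OF P]])
  finally have "card {v\<in>Delta m P. dotv m a v + k \<noteq> 0} = card (Delta m P :: (nat \<Rightarrow> 'a) set) - card {v\<in>Delta m P. dotv m a v + k = 0}" .
  thus ?thesis using card_Delta[OF P, where 'a='a] card_zero_set[of P m i a k, OF P i ai] by simp
qed

lemma sum_nonzero:
  fixes a :: "nat \<Rightarrow> 'a::{finite,field}"
  assumes P: "P \<subseteq> {1..m}" and i: "i \<in> P" and ai: "a i \<noteq> 0"
  shows "(\<Sum>v\<in>Delta m P. if dotv m a v + k \<noteq> 0 then 1 else 0 :: nat) = card (UNIV::'a set) ^ card P - card (UNIV::'a set) ^ (card P - 1)"
proof -
  have "(\<Sum>v\<in>Delta m P. if dotv m a v + k \<noteq> 0 then 1 else 0 :: nat) = card {v\<in>Delta m P. dotv m a v + k \<noteq> 0}"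
    by (rule sum_ind[OF finite_Delta[OF P]])
  thus ?thesis using card_nonzero_set[of P m i a k, OF P i ai] by simp
qed

lemma sum_nonzero_triv:
  fixes a :: "nat \<Rightarrow> 'a::{finite,field}"
  assumes P: "P \<subseteq> {1..m}" and z: "\<forall>i\<in>P. a i = 0"
  shows "(\<Sum>v\<in>Delta m P. if dotv m a v + k \<noteq> 0 then 1 else 0 :: nat) = (if k \<noteq> 0 then card (UNIV::'a set) ^ card P else 0)"
proof -
  have z0: "\<And>v. v \<in> Delta m P \<Longrightarrow> dotv m a v = 0" using dotv_Delta_zero[OF P _ z] by blast
  have "(\<Sum>v\<in>Delta m P. if dotv m a v + k \<noteq> 0 then 1 else 0 :: nat) = (\<Sum>v\<in>(Delta m P :: (nat \<Rightarrow> 'a) set). if k \<noteq> 0 then 1 else 0)"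
    by (rule sum.cong[OF refl]) (simp add: z0)
  thus ?thesis using card_Delta[OF P, where 'a='a] by simp
qed

definition gen :: "(nat \<Rightarrow> 'a::ring_1) \<Rightarrow> (nat \<Rightarrow> 'a) \<Rightarrow> (nat \<Rightarrow> 'a) \<Rightarrow> bool \<Rightarrow> 'a vec3" where
  "gen w1 w2 w3 e = ((\<lambda>i. w2 i + (if e then w1 i else 0)), w3, w1)"

definition Param :: "nat \<Rightarrow> nat set \<Rightarrow> nat set \<Rightarrow> nat set \<Rightarrow> ((nat \<Rightarrow> 'a::ring_1) \<times> (nat \<Rightarrow> 'a) \<times> (nat \<Rightarrow> 'a) \<times> bool) set" where
  "Param m A B C = Delta_star m A \<times> Delta m B \<times> Delta_c m C \<times> (UNIV :: bool set)"

definition genp :: "((nat \<Rightarrow> 'a::ring_1) \<times> (nat \<Rightarrow> 'a) \<times> (nat \<Rightarrow> 'a) \<times> bool) \<Rightarrow> 'a vec3" where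
  "genp p = (case p of (w1, w2, w3, e) \<Rightarrow> gen w1 w2 w3 e)"

lemma N4_gen: "N4 m A B C = genp ` Param m A B C"
proof
  show "N4 m A B C \<subseteq> genp ` Param m A B C"
  proof
    fix g assume "g \<in> N4 m A B C"
    hence "\<exists>w1 w2 w3 \<omega>. g = ((\<lambda>i. w2 i + \<omega> i), w3, w1) \<and> w1 \<in> Delta_star m A \<and> w2 \<in> Delta m B \<and> w3 \<in> Delta_c m C \<and> \<omega> \<in> {(\<lambda>_. 0), w1}"
      unfolding N4_def by (simp only: mem_Collect_eq)
    then obtain w1 w2 w3 \<omega> where g: "g = ((\<lambda>i. w2 i + \<omega> i), w3, w1)"
      and w: "w1 \<in> Delta_star m A" "w2 \<in> Delta m B" "w3 \<in> Delta_c m C" "\<omega> \<in> {(\<lambda>_. 0), w1}"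
      by (elim exE conjE) (rule that)
    show "g \<in> genp ` Param m A B C"
    proof (cases "\<omega> = (\<lambda>_. 0)")
      case True
      hence "g = genp (w1, w2, w3, False)" using g by (simp add: genp_def gen_def)
      thus ?thesis using w by (auto simp: Param_def)
    next
      case False
      hence "\<omega> = w1" using w by auto
      hence "g = genp (w1, w2, w3, True)" using g by (simp add: genp_def gen_def)
      thus ?thesis using w by (auto simp: Param_def)
    qed
  qed
  show "genp ` Param m A B C \<subseteq> N4 m A B C"
  proof
    fix g assume "g \<in> genp ` Param m A B C"
    then obtain w1 w2 w3 e where g: "g = gen w1 w2 w3 e"
      and w: "w1 \<in> Delta_star m A" "w2 \<in> Delta m B" "w3 \<in> Delta_c m C"
      unfolding Param_def genp_def by auto
    show "g \<in> N4 m A B C"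
    proof (cases e)
      case True
      hence "g = ((\<lambda>i. w2 i + w1 i), w3, w1)" using g by (simp add: gen_def)
      thus ?thesis using w unfolding N4_def by blast
    next
      case False
      hence "g = ((\<lambda>i. w2 i + (\<lambda>_. 0) i), w3, w1)" using g by (simp add: gen_def)
      thus ?thesis using w unfolding N4_def
        by (intro CollectI exI[of _ w1] exI[of _ w2] exI[of _ w3] exI[of _ "\<lambda>_. 0"]) simp
    qed
  qed
qed

lemma Delta_star_nz:
  assumes "w \<in> Delta_star m A" "A \<subseteq> {1..m}"
  shows "\<exists>j\<in>A. w j \<noteq> 0"
proof -
  have "w \<noteq> (\<lambda>_. 0)" using assms by (simp add: Delta_star_def)
  then obtain j where "w j \<noteq> 0" by auto
  moreover have "w \<in> Delta m A" using assms by (simp add: Delta_star_def)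
  ultimately show ?thesis using assms(2) by (auto simp: Delta_alt)
qed

lemma genp_inj:
  assumes AB: "A \<inter> B = {}" and A: "A \<subseteq> {1..m}" and B: "B \<subseteq> {1..m}"
  shows "inj_on genp (Param m A B C :: ((nat \<Rightarrow> 'a::ring_1) \<times> _) set)"
proof (rule inj_onI)
  fix p p' :: "(nat \<Rightarrow> 'a) \<times> (nat \<Rightarrow> 'a) \<times> (nat \<Rightarrow> 'a) \<times> bool"
  assume p: "p \<in> Param m A B C" and p': "p' \<in> Param m A B C" and e: "genp p = genp p'"
  obtain w1 w2 w3 b where pp: "p = (w1, w2, w3, b)" by (cases p) auto
  obtain v1 v2 v3 c where pp': "p' = (v1, v2, v3, c)" by (cases p') auto
  have w: "w1 \<in> Delta_star m A" "w2 \<in> Delta m B" "w3 \<in> Delta_c m C"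
    using p pp by (auto simp: Param_def)
  have v: "v1 \<in> Delta_star m A" "v2 \<in> Delta m B" "v3 \<in> Delta_c m C"
    using p' pp' by (auto simp: Param_def)
  have e1: "w1 = v1" and e3: "w3 = v3" using e pp pp' by (auto simp: genp_def gen_def)
  have e2: "\<And>i. w2 i + (if b then w1 i else 0) = v2 i + (if c then w1 i else 0)"
    using e pp pp' e1 by (auto simp: genp_def gen_def fun_eq_iff)
  obtain j where j: "j \<in> A" "w1 j \<noteq> 0" using Delta_star_nz[OF w(1) A] by blast
  have "j \<notin> B" using j AB by auto
  hence "w2 j = 0" "v2 j = 0" using w v B by (auto simp: Delta_alt)
  hence bc: "b = c" using e2[of j] j by (cases b; cases c) auto
  hence "w2 = v2" using e2 by (auto simp: fun_eq_iff)
  thus "p = p'" using pp pp' e1 e3 bc by simp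
qed

lemma zero_Delta: "(\<lambda>_. 0) \<in> Delta m P"
  by (simp add: Delta_def fvec_def supp_def)

lemma card_Delta_star:
  assumes "A \<subseteq> {1..m}"
  shows "card (Delta_star m A :: (nat \<Rightarrow> 'a::{finite,zero}) set) = card (UNIV::'a set) ^ card A - 1"
  unfolding Delta_star_def using card_Delta[OF assms, where 'a='a] finite_Delta[OF assms, where 'a='a] zero_Delta[of m A, where 'a='a]
  by (simp add: card_Diff_singleton)

lemma finite_Delta_star:
  assumes "A \<subseteq> {1..m}"
  shows "finite (Delta_star m A :: (nat \<Rightarrow> 'a::{finite,zero}) set)"
  unfolding Delta_star_def using finite_Delta[OF assms, where 'a='a] by simp

lemma Delta_sub_fvec: "Delta m P \<subseteq> fvec m"
  by (auto simp: Delta_def)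

lemma card_Delta_c:
  assumes "C \<subseteq> {1..m}"
  shows "card (Delta_c m C :: (nat \<Rightarrow> 'a::{finite,zero}) set) = card (UNIV::'a set) ^ m - card (UNIV::'a set) ^ card C"
proof -
  have "card (Delta_c m C :: (nat \<Rightarrow> 'a) set) = card (fvec m :: (nat \<Rightarrow> 'a) set) - card (Delta m C :: (nat \<Rightarrow> 'a) set)"
    unfolding Delta_c_def by (rule card_Diff_subset[OF finite_Delta[OF assms] Delta_sub_fvec])
  moreover have "card (fvec m :: (nat \<Rightarrow> 'a) set) = card (UNIV::'a set) ^ m"
    using card_Delta[of "{1..m}" m, where 'a='a] by (simp add: fvec_Delta)
  ultimately show ?thesis using card_Delta[OF assms, where 'a='a] by simp
qed

lemma finite_fvec: "finite (fvec m :: (nat \<Rightarrow> 'a::{finite,zero}) set)"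
  using finite_Delta[of "{1..m}" m] by (simp add: fvec_Delta)

lemma finite_Delta_c:
  "finite (Delta_c m C :: (nat \<Rightarrow> 'a::{finite,zero}) set)"
  unfolding Delta_c_def using finite_fvec[where 'a='a] by simp

lemma finite_Param:
  assumes "A \<subseteq> {1..m}" "B \<subseteq> {1..m}"
  shows "finite (Param m A B C :: ((nat \<Rightarrow> 'a::{finite,ring_1}) \<times> _) set)"
  unfolding Param_def using finite_Delta_star[OF assms(1), where 'a='a] finite_Delta[OF assms(2), where 'a='a]
    finite_Delta_c[where 'a='a] by simp

lemma card_Param:
  assumes "A \<subseteq> {1..m}" "B \<subseteq> {1..m}" "C \<subseteq> {1..m}"
  shows "card (Param m A B C :: ((nat \<Rightarrow> 'a::{finite,ring_1}) \<times> _) set) =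
    (card (UNIV::'a set) ^ card A - 1) * (card (UNIV::'a set) ^ card B * ((card (UNIV::'a set) ^ m - card (UNIV::'a set) ^ card C) * 2))"
  unfolding Param_def using card_Delta_star[OF assms(1), where 'a='a] card_Delta[OF assms(2), where 'a='a]
    card_Delta_c[OF assms(3), where 'a='a] by (simp add: card_cartesian_product)

lemma card_N4:
  assumes "A \<inter> B = {}" "A \<subseteq> {1..m}" "B \<subseteq> {1..m}" "C \<subseteq> {1..m}"
  shows "card (N4 m A B C :: ('a::{finite,ring_1}) vec3 set) =
    (card (UNIV::'a set) ^ card A - 1) * (card (UNIV::'a set) ^ card B * ((card (UNIV::'a set) ^ m - card (UNIV::'a set) ^ card C) * 2))"
  unfolding N4_gen using card_image[OF genp_inj[OF assms(1-3), of C, where 'a='a]] card_Param[OF assms(2-4), where 'a='a]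
  by simp

lemma finite_N4:
  assumes "A \<subseteq> {1..m}" "B \<subseteq> {1..m}"
  shows "finite (N4 m A B C :: ('a::{finite,ring_1}) vec3 set)"
  unfolding N4_gen using finite_Param[OF assms, where 'a='a] by simp

lemma smult3_smult3: "smult3 a (smult3 b x) = smult3 (a * b) x"
  by (simp add: smult3_def mult.assoc)

lemma smult3_one: "smult3 1 x = x"
  by (simp add: smult3_def)

lemma smult3_third: "snd (snd (smult3 a x)) = (\<lambda>i. a * snd (snd x) i)"
  by (simp add: smult3_def)

lemma rep_unique:
  assumes "is_projective_rep N Nbar" "x \<in> N"
    "y1 \<in> Nbar" "a1 \<noteq> 0" "y1 = smult3 a1 x"
    "y2 \<in> Nbar" "a2 \<noteq> 0" "y2 = smult3 a2 x"
  shows "y1 = y2"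
  using assms unfolding is_projective_rep_def by blast

lemma rep_exists:
  assumes "is_projective_rep N Nbar" "x \<in> N"
  obtains y a where "y \<in> Nbar" "a \<noteq> 0" "y = smult3 a x"
  using assms unfolding is_projective_rep_def by blast

lemma orbit_count:
  fixes N Nbar :: "('a::{finite,field}) vec3 set"
  assumes rep: "is_projective_rep N Nbar" and fin: "finite N"
    and closed: "\<And>a g. a \<noteq> 0 \<Longrightarrow> g \<in> N \<Longrightarrow> smult3 a g \<in> N"
    and nz: "\<And>g. g \<in> N \<Longrightarrow> snd (snd g) \<noteq> (\<lambda>_. 0)"
    and inv: "\<And>a g. a \<noteq> 0 \<Longrightarrow> g \<in> N \<Longrightarrow> Q (smult3 a g) = Q g"
  shows "card {g\<in>N. Q g} = (card (UNIV::'a set) - 1) * card {g\<in>Nbar. Q g}"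
proof -
  have sub: "Nbar \<subseteq> N" using rep by (simp add: is_projective_rep_def)
  define orb where "orb y = (\<lambda>a. smult3 a y) ` (UNIV - {0::'a})" for y :: "'a vec3"
  have card_orb: "card (orb y) = card (UNIV::'a set) - 1" if y: "y \<in> N" for y
  proof -
    obtain j where j: "snd (snd y) j \<noteq> 0" using nz[OF y] by auto
    have "inj_on (\<lambda>a. smult3 a y) (UNIV - {0::'a})"
    proof (rule inj_onI)
      fix a b :: 'a assume "smult3 a y = smult3 b y"
      hence "snd (snd (smult3 a y)) j = snd (snd (smult3 b y)) j" by simp
      thus "a = b" using j by (simp add: smult3_def)
    qed
    thus ?thesis unfolding orb_def by (simp add: card_image card_Diff_singleton)
  qed
  have eq: "{g\<in>N. Q g} = (\<Union>y\<in>{y\<in>Nbar. Q y}. orb y)"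
  proof
    show "{g\<in>N. Q g} \<subseteq> (\<Union>y\<in>{y\<in>Nbar. Q y}. orb y)"
    proof
      fix g assume g: "g \<in> {g\<in>N. Q g}"
      obtain y a where y: "y \<in> Nbar" "a \<noteq> 0" "y = smult3 a g" using rep_exists[OF rep] g by blast
      have "g = smult3 (inverse a) y" using y by (simp add: smult3_smult3 smult3_one)
      hence "g \<in> orb y" unfolding orb_def using y by auto
      moreover have "Q y" using inv[of a g] y g by auto
      ultimately show "g \<in> (\<Union>y\<in>{y\<in>Nbar. Q y}. orb y)" using y by blast
    qed
    show "(\<Union>y\<in>{y\<in>Nbar. Q y}. orb y) \<subseteq> {g\<in>N. Q g}"
    proof
      fix g assume "g \<in> (\<Union>y\<in>{y\<in>Nbar. Q y}. orb y)"
      then obtain y a where y: "y \<in> Nbar" "Q y" "a \<noteq> 0" "g = smult3 a y" unfolding orb_def by blast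
      have yN: "y \<in> N" using y sub by blast
      show "g \<in> {g\<in>N. Q g}" using closed[OF y(3) yN] inv[OF y(3) yN] y by simp
    qed
  qed
  have disj: "orb y1 \<inter> orb y2 = {}" if "y1 \<in> {y\<in>Nbar. Q y}" "y2 \<in> {y\<in>Nbar. Q y}" "y1 \<noteq> y2" for y1 y2
  proof (rule ccontr)
    assume "orb y1 \<inter> orb y2 \<noteq> {}"
    then obtain z0 where "z0 \<in> orb y1" "z0 \<in> orb y2" by blast
    then obtain a1 a2 where a: "a1 \<noteq> 0" "a2 \<noteq> 0" "z0 = smult3 a1 y1" "z0 = smult3 a2 y2"
      unfolding orb_def by blast
    hence a: "a1 \<noteq> 0" "a2 \<noteq> 0" "smult3 a1 y1 = smult3 a2 y2" by auto
    define z where "z = smult3 a1 y1"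
    have "y1 \<in> N" using that sub by blast
    hence zN: "z \<in> N" using closed[OF a(1)] unfolding z_def by blast
    have "y1 = smult3 (inverse a1) z" unfolding z_def using a(1) by (simp add: smult3_smult3 smult3_one)
    moreover have "y2 = smult3 (inverse a2) z" unfolding z_def a(3) using a(2) by (simp add: smult3_smult3 smult3_one)
    ultimately have "y1 = y2" using rep_unique[OF rep zN] that a by simp
    thus False using that by simp
  qed
  have finNbar: "finite Nbar" using sub fin finite_subset by blast
  have "card {g\<in>N. Q g} = (\<Sum>y\<in>{y\<in>Nbar. Q y}. card (orb y))"
    unfolding eq
  proof (rule card_UN_disjoint)
    show "finite {y\<in>Nbar. Q y}" using finNbar by simp
    show "\<forall>y\<in>{y\<in>Nbar. Q y}. finite (orb y)" unfolding orb_def by simp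
    show "\<forall>y1\<in>{y\<in>Nbar. Q y}. \<forall>y2\<in>{y\<in>Nbar. Q y}. y1 \<noteq> y2 \<longrightarrow> orb y1 \<inter> orb y2 = {}"
      using disj by blast
  qed
  also have "\<dots> = (\<Sum>y\<in>{y\<in>Nbar. Q y}. card (UNIV::'a set) - 1)"
    by (rule sum.cong[OF refl]) (use card_orb sub in blast)
  finally show ?thesis by simp
qed

lemma smult_Delta:
  assumes "(a::'a::field) \<noteq> 0" "w \<in> Delta m P"
  shows "(\<lambda>i. a * w i) \<in> Delta m (P::nat set)"
  using assms by (auto simp: Delta_def fvec_def supp_def)

lemma smult_Delta_rev:
  assumes "(a::'a::field) \<noteq> 0" "(\<lambda>i. a * w i) \<in> Delta m P"
  shows "w \<in> Delta m (P::nat set)"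
  using assms by (auto simp: Delta_def fvec_def supp_def)

lemma smult_fvec:
  assumes "w \<in> fvec m"
  shows "(\<lambda>i. (a::'a::field) * w i) \<in> fvec m"
  using assms by (auto simp: fvec_def)

lemma smult_Delta_star:
  assumes "(a::'a::field) \<noteq> 0" "w \<in> Delta_star m P"
  shows "(\<lambda>i. a * w i) \<in> Delta_star m P"
proof -
  have "w \<noteq> (\<lambda>_. 0)" using assms by (simp add: Delta_star_def)
  then obtain j where "w j \<noteq> 0" by auto
  hence "(\<lambda>i. a * w i) \<noteq> (\<lambda>_. 0)" using assms(1) by (metis mult_eq_0_iff)
  thus ?thesis using smult_Delta[OF assms(1)] assms(2) by (simp add: Delta_star_def)
qed

lemma smult_Delta_c:
  assumes "(a::'a::field) \<noteq> 0" "w \<in> Delta_c m P"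
  shows "(\<lambda>i. a * w i) \<in> Delta_c m P"
  using assms smult_Delta_rev[OF assms(1), of w m P] smult_fvec[of w m a] by (auto simp: Delta_c_def)

lemma smult3_gen: "smult3 a (gen w1 w2 w3 e) = gen (\<lambda>i. a * w1 i) (\<lambda>i. a * w2 i) (\<lambda>i. a * w3 i) e"
  by (auto simp: smult3_def gen_def fun_eq_iff algebra_simps)

lemma N4_closed:
  assumes "(a::'a::field) \<noteq> 0" "g \<in> N4 m A B C"
  shows "smult3 a g \<in> N4 m A B C"
proof -
  obtain w1 w2 w3 e where g: "g = gen w1 w2 w3 e" and w: "w1 \<in> Delta_star m A" "w2 \<in> Delta m B" "w3 \<in> Delta_c m C"
    using assms(2) unfolding N4_gen Param_def genp_def by auto
  show ?thesis unfolding g smult3_gen N4_gen Param_def genp_def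
    using smult_Delta_star[OF assms(1) w(1)] smult_Delta[OF assms(1) w(2)] smult_Delta_c[OF assms(1) w(3)]
    by (auto intro!: image_eqI[where x = "((\<lambda>i. a * w1 i), (\<lambda>i. a * w2 i), (\<lambda>i. a * w3 i), e)"])
qed

lemma N4_nz:
  assumes "g \<in> N4 m A B C"
  shows "snd (snd g) \<noteq> (\<lambda>_. 0)"
  using assms unfolding N4_gen Param_def genp_def gen_def Delta_star_def by auto

lemma sum_prod: "sum f (X \<times> Y) = (\<Sum>x\<in>X. \<Sum>y\<in>Y. f (x,y))"
  by (simp add: sum.cartesian_product)

lemma sum_Param:
  "(\<Sum>p\<in>Param m A B C. f p) = (\<Sum>w1\<in>Delta_star m A. \<Sum>w2\<in>Delta m B. \<Sum>w3\<in>Delta_c m C. f (w1,w2,w3,False) + f (w1,w2,w3,True))"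
  unfolding Param_def
  by (simp add: sum_prod UNIV_bool add.commute)

lemma dot3_gen:
  "dot3 m (a,b,c) (gen w1 w2 w3 e) = dotv m a w2 + ((if e then dotv m a w1 else 0) + dotv m b w3 + dotv m c w1)"
  by (cases e) (simp_all add: dot3_def dotv_def gen_def sum.distrib algebra_simps)

lemma cnt_N4:
  fixes Q :: "('a::{finite,field}) vec3 \<Rightarrow> bool"
  assumes AB: "A \<inter> B = {}" and A: "A \<subseteq> {1..m}" and B: "B \<subseteq> {1..m}"
  shows "card {g\<in>N4 m A B C. Q g} = (\<Sum>p\<in>Param m A B C. if Q (genp p) then 1 else 0)"
proof -
  have "{g\<in>N4 m A B C. Q g} = genp ` {p\<in>Param m A B C. Q (genp p)}"
    unfolding N4_gen by auto
  hence "card {g\<in>N4 m A B C. Q g} = card {p\<in>(Param m A B C :: ((nat \<Rightarrow> 'a) \<times> _) set). Q (genp p)}"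
    using card_image[OF inj_on_subset[OF genp_inj[OF AB A B, of C, where 'a='a]]] by auto
  also have "\<dots> = (\<Sum>p\<in>Param m A B C. if Q (genp p) then 1 else 0)"
    using sum_ind[OF finite_Param[OF A B, of C, where 'a='a]] by simp
  finally show ?thesis .
qed

lemma sum_swap_lower:
  fixes G :: "'x \<Rightarrow> 'y \<Rightarrow> 'z \<Rightarrow> nat"
  assumes "finite Y" "finite Z" "\<And>x z. x \<in> X \<Longrightarrow> z \<in> Z \<Longrightarrow> L \<le> (\<Sum>y\<in>Y. G x y z)"
  shows "card X * card Z * L \<le> (\<Sum>x\<in>X. \<Sum>y\<in>Y. \<Sum>z\<in>Z. G x y z)"
proof -
  have "(\<Sum>x\<in>X. \<Sum>y\<in>Y. \<Sum>z\<in>Z. G x y z) = (\<Sum>x\<in>X. \<Sum>z\<in>Z. \<Sum>y\<in>Y. G x y z)"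
    by (rule sum.cong[OF refl]) (rule sum.swap)
  moreover have "(\<Sum>x\<in>X. \<Sum>z\<in>Z. L) \<le> (\<Sum>x\<in>X. \<Sum>z\<in>Z. \<Sum>y\<in>Y. G x y z)"
    by (intro sum_mono) (use assms in auto)
  ultimately show ?thesis by (simp add: mult.assoc)
qed

lemma sum_inner_lower:
  fixes G :: "'x \<Rightarrow> 'y \<Rightarrow> 'z \<Rightarrow> nat"
  assumes "\<And>x y. x \<in> X \<Longrightarrow> y \<in> Y \<Longrightarrow> L \<le> (\<Sum>z\<in>Z. G x y z)"
  shows "card X * card Y * L \<le> (\<Sum>x\<in>X. \<Sum>y\<in>Y. \<Sum>z\<in>Z. G x y z)"
proof -
  have "(\<Sum>x\<in>X. \<Sum>y\<in>Y. L) \<le> (\<Sum>x\<in>X. \<Sum>y\<in>Y. \<Sum>z\<in>Z. G x y z)"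
    by (intro sum_mono) (use assms in auto)
  thus ?thesis by (simp add: mult.assoc)
qed

lemma sum_outer_lower:
  fixes G :: "'x \<Rightarrow> 'y \<Rightarrow> 'z \<Rightarrow> nat"
  assumes "finite X" "finite Y" "finite Z" "\<And>y z. y \<in> Y \<Longrightarrow> z \<in> Z \<Longrightarrow> L \<le> (\<Sum>x\<in>X. G x y z)"
  shows "card Y * card Z * L \<le> (\<Sum>x\<in>X. \<Sum>y\<in>Y. \<Sum>z\<in>Z. G x y z)"
proof -
  have "(\<Sum>x\<in>X. \<Sum>y\<in>Y. \<Sum>z\<in>Z. G x y z) = (\<Sum>y\<in>Y. \<Sum>x\<in>X. \<Sum>z\<in>Z. G x y z)"
    by (rule sum.swap)
  also have "\<dots> = (\<Sum>y\<in>Y. \<Sum>z\<in>Z. \<Sum>x\<in>X. G x y z)"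
    by (rule sum.cong[OF refl]) (rule sum.swap)
  finally have e: "(\<Sum>x\<in>X. \<Sum>y\<in>Y. \<Sum>z\<in>Z. G x y z) = (\<Sum>y\<in>Y. \<Sum>z\<in>Z. \<Sum>x\<in>X. G x y z)" .
  have "(\<Sum>y\<in>Y. \<Sum>z\<in>Z. L) \<le> (\<Sum>y\<in>Y. \<Sum>z\<in>Z. \<Sum>x\<in>X. G x y z)"
    by (intro sum_mono) (use assms in auto)
  thus ?thesis using e by (simp add: mult.assoc)
qed

lemma card_UNIV_ge2: "2 \<le> card (UNIV::'a::{finite,field} set)"
proof -
  have "card {0::'a, 1} = 2" by simp
  moreover have "card {0::'a, 1} \<le> card (UNIV::'a set)" by (rule card_mono) auto
  ultimately show ?thesis by simp
qed

lemma dotv_add: "dotv m (\<lambda>i. a i + c i) w = dotv m a w + dotv m c w"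
  by (simp add: dotv_def sum.distrib algebra_simps)

lemma dotv_zero_vec: "dotv m a (\<lambda>_. 0) = 0"
  by (simp add: dotv_def)

lemma sum_star:
  fixes l :: "nat \<Rightarrow> 'a::{finite,field}"
  assumes A: "A \<subseteq> {1..m}"
  shows "(\<Sum>w\<in>Delta_star m A. if dotv m l w + k \<noteq> 0 then 1 else 0 :: nat) + (if k \<noteq> 0 then 1 else 0)
       = (\<Sum>w\<in>Delta m A. if dotv m l w + k \<noteq> 0 then 1 else 0)"
proof -
  have "(\<Sum>w\<in>(Delta m A :: (nat \<Rightarrow> 'a) set). if dotv m l w + k \<noteq> 0 then 1 else 0 :: nat)
     = (if dotv m l (\<lambda>_. 0) + k \<noteq> 0 then 1 else 0) + (\<Sum>w\<in>Delta m A - {(\<lambda>_. 0)}. if dotv m l w + k \<noteq> 0 then 1 else 0)"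
    by (rule sum.remove[OF finite_Delta[OF A] zero_Delta])
  thus ?thesis by (simp add: Delta_star_def dotv_zero_vec)
qed

lemma pow_diff_ge2:
  assumes q: "2 \<le> (q::nat)" and n: "2 \<le> n"
  shows "2 \<le> q ^ n - q ^ (n - 1)"
proof -
  obtain n' where n': "n = Suc n'" using n by (cases n) auto
  have e: "q ^ n - q ^ (n - 1) = (q - 1) * q ^ n'" using n' by (simp add: diff_mult_distrib)
  moreover have h1: "1 \<le> q - 1" using q by simp
  moreover have h2: "2 \<le> q ^ n'"
  proof -
    have "q ^ 1 \<le> q ^ n'" using q n n' by (intro power_increasing) auto
    thus ?thesis using q by simp
  qed
  ultimately have "1 * 2 \<le> (q - 1) * q ^ n'" using mult_le_mono[OF h1 h2] by blast
  thus ?thesis unfolding e by simp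
qed

lemma pair_bound:
  fixes l0 l1 :: "nat \<Rightarrow> 'a::{finite,field}"
  assumes A: "A \<subseteq> {1..m}" and nA: "2 \<le> card A"
    and nz: "(\<exists>i\<in>A. l0 i \<noteq> 0) \<or> (\<exists>i\<in>A. l1 i \<noteq> 0)"
  shows "card (UNIV::'a set) ^ card A - card (UNIV::'a set) ^ (card A - 1) \<le>
    (\<Sum>w\<in>Delta_star m A. (if dotv m l0 w + k \<noteq> 0 then 1 else 0) + (if dotv m l1 w + k \<noteq> 0 then 1 else 0) :: nat)"
proof -
  define q where "q = card (UNIV::'a set)"
  define T where "T = q ^ card A - q ^ (card A - 1)"
  have T2: "2 \<le> T" unfolding T_def q_def using pow_diff_ge2[OF card_UNIV_ge2 nA] .
  define X where "X l = (\<Sum>w\<in>Delta_star m A. if dotv m l w + k \<noteq> 0 then 1 else 0 :: nat)" for l :: "nat \<Rightarrow> 'a"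
  define Y where "Y l = (\<Sum>w\<in>Delta m A. if dotv m l w + k \<noteq> 0 then 1 else 0 :: nat)" for l :: "nat \<Rightarrow> 'a"
  have XY: "X l + (if k \<noteq> 0 then 1 else 0) = Y l" for l
    unfolding X_def Y_def by (rule sum_star[OF A])
  have Ynz: "Y l = T" if "\<exists>i\<in>A. l i \<noteq> 0" for l
    using that sum_nonzero[OF A, of _ l k] unfolding Y_def T_def q_def by blast
  have Yz: "Y l = (if k \<noteq> 0 then q ^ card A else 0)" if "\<not> (\<exists>i\<in>A. l i \<noteq> 0)" for l
    using that sum_nonzero_triv[OF A, of l k] unfolding Y_def q_def by blast
  have qA: "2 \<le> q ^ card A"
  proof -
    have "T \<le> q ^ card A" unfolding T_def by simp
    thus ?thesis using T2 by simp
  qed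
  have Yge: "2 \<le> Y l" if "k \<noteq> 0" for l
    using Ynz[of l] Yz[of l] T2 qA that by (cases "\<exists>i\<in>A. l i \<noteq> 0") auto
  have goal: "T \<le> X l0 + X l1"
  proof (cases "k = 0")
    case True
    hence "X l0 = Y l0" "X l1 = Y l1" using XY[of l0] XY[of l1] by auto
    moreover have "T \<le> Y l0 + Y l1"
    proof (cases "\<exists>i\<in>A. l0 i \<noteq> 0")
      case True thus ?thesis using Ynz[of l0] by simp
    next
      case False thus ?thesis using nz Ynz[of l1] by simp
    qed
    ultimately show ?thesis by simp
  next
    case False
    hence "X l0 + 1 = Y l0" "X l1 + 1 = Y l1" using XY[of l0] XY[of l1] by auto
    moreover have "2 \<le> Y l0" "2 \<le> Y l1" using Yge False by auto
    moreover have "Y l0 = T \<or> Y l1 = T" using nz Ynz[of l0] Ynz[of l1] by blast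
    ultimately show ?thesis by linarith
  qed
  thus ?thesis unfolding X_def T_def q_def by (simp add: sum.distrib)
qed

lemma Q_le: "2 \<le> (Q::nat) \<Longrightarrow> Q \<le> 2 * (Q - 1)" by linarith

lemma qpow_ge2: "2 \<le> (q::nat) \<Longrightarrow> 1 \<le> n \<Longrightarrow> 2 \<le> q ^ n"
proof -
  assume q: "2 \<le> q" and n: "1 \<le> n"
  have "q ^ 1 \<le> q ^ n" using q n by (intro power_increasing) auto
  thus ?thesis using q by simp
qed

lemma arith1:
  assumes q: "2 \<le> (q::nat)" and nA: "2 \<le> nA" and nB: "1 \<le> nB"
  shows "(q - 1) * (D * q ^ (nA + nB - 1)) \<le> (q ^ nA - 1) * D * (2 * (q ^ nB - q ^ (nB - 1)))"
proof -
  obtain b' where b': "nB = Suc b'" using nB by (cases nB) auto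
  have e1: "q ^ (nA + nB - 1) = q ^ nA * q ^ b'" by (simp add: b' power_add)
  have e2: "q ^ nB - q ^ (nB - 1) = (q - 1) * q ^ b'" by (simp add: b' diff_mult_distrib)
  have Q: "q ^ nA \<le> 2 * (q ^ nA - 1)" by (rule Q_le[OF qpow_ge2[OF q]]) (use nA in simp)
  have "q ^ nA * (D * (q - 1) * q ^ b') \<le> (2 * (q ^ nA - 1)) * (D * (q - 1) * q ^ b')"
    by (rule mult_le_mono1[OF Q])
  thus ?thesis unfolding e1 e2 by (simp add: ac_simps)
qed

lemma arith2:
  assumes nA: "1 \<le> nA"
  shows "(q - 1) * (D * q ^ (nA + nB - 1)) \<le> (q::nat) ^ nB * D * (q ^ nA - q ^ (nA - 1))"
proof -
  obtain a' where a': "nA = Suc a'" using nA by (cases nA) auto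
  have e1: "q ^ (nA + nB - 1) = q ^ nB * q ^ a'" by (simp add: a' power_add)
  have e2: "q ^ nA - q ^ (nA - 1) = (q - 1) * q ^ a'" by (simp add: a' diff_mult_distrib)
  show ?thesis unfolding e1 e2 by (simp add: ac_simps)
qed

lemma arith3:
  assumes q: "2 \<le> (q::nat)" and nA: "2 \<le> nA" and nC: "1 \<le> nC" and m: "nC \<le> m"
  shows "(q - 1) * ((q ^ m - q ^ nC) * q ^ (nA + nB - 1)) \<le>
     (q ^ nA - 1) * q ^ nB * (2 * ((q ^ m - q ^ (m - 1)) - (q ^ nC - q ^ (nC - 1))))"
proof -
  obtain a' where a': "nA = Suc a'" using nA by (cases nA) auto
  obtain c' where c': "nC = Suc c'" using nC by (cases nC) auto
  obtain m' where m': "m = Suc m'" using nC m by (cases m) auto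
  have e1: "q ^ (nA + nB - 1) = q ^ nB * q ^ a'" by (simp add: a' power_add)
  have e2: "q ^ m - q ^ nC = q * (q ^ m' - q ^ c')" by (simp add: m' c' diff_mult_distrib2)
  have e3: "(q ^ m - q ^ (m - 1)) - (q ^ nC - q ^ (nC - 1)) = (q - 1) * (q ^ m' - q ^ c')"
    by (simp add: m' c' diff_mult_distrib diff_mult_distrib2)
  have e4: "q ^ nA = q * q ^ a'" by (simp add: a')
  have Q: "q ^ nA \<le> 2 * (q ^ nA - 1)" by (rule Q_le[OF qpow_ge2[OF q]]) (use nA in simp)
  have "q ^ nA * ((q - 1) * (q ^ m' - q ^ c') * q ^ nB) \<le> (2 * (q ^ nA - 1)) * ((q - 1) * (q ^ m' - q ^ c') * q ^ nB)"
    by (rule mult_le_mono1[OF Q])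
  hence "(q * q ^ a') * ((q - 1) * (q ^ m' - q ^ c') * q ^ nB) \<le> (2 * (q ^ nA - 1)) * ((q - 1) * (q ^ m' - q ^ c') * q ^ nB)"
    unfolding e4 .
  thus ?thesis unfolding e1 e2 e3 by (simp add: ac_simps)
qed

lemma sum_DCc:
  assumes C: "C \<subseteq> {1..m}"
  shows "(\<Sum>w\<in>Delta_c m C. f w :: nat) = (\<Sum>w\<in>fvec m. f w) - (\<Sum>w\<in>(Delta m C :: (nat \<Rightarrow> 'a::{finite,zero}) set). f w)"
proof -
  have "(\<Sum>w\<in>(fvec m :: (nat \<Rightarrow> 'a) set). f w) = (\<Sum>w\<in>fvec m - Delta m C. f w) + (\<Sum>w\<in>Delta m C. f w)"
    by (rule sum.subset_diff[OF Delta_sub_fvec finite_fvec])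
  thus ?thesis unfolding Delta_c_def by simp
qed

lemma weight_lower:
  fixes a b c :: "nat \<Rightarrow> 'a::{finite,field}"
  assumes AB: "A \<inter> B = {}" and A: "A \<subseteq> {1..m}" and B: "B \<subseteq> {1..m}" and C: "C \<subseteq> {1..m}"
    and nA: "2 \<le> card A" and Bne: "B \<noteq> {}" and Cne: "C \<noteq> {}"
    and nz: "(\<exists>i\<in>B. a i \<noteq> 0) \<or> (\<exists>i\<in>A. c i \<noteq> 0) \<or> (\<exists>i\<in>A. a i + c i \<noteq> 0) \<or> (\<exists>i\<in>{1..m}. b i \<noteq> 0)"
  shows "(card (UNIV::'a set) - 1) * ((card (UNIV::'a set) ^ m - card (UNIV::'a set) ^ card C) * card (UNIV::'a set) ^ (card A + card B - 1))
     \<le> card {g\<in>N4 m A B C. dot3 m (a,b,c) g \<noteq> 0}"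
proof -
  define q where "q = card (UNIV::'a set)"
  have q2: "2 \<le> q" unfolding q_def by (rule card_UNIV_ge2)
  have nB: "1 \<le> card B" using Bne finite_subset[OF B] by (simp add: Suc_le_eq card_gt_0_iff)
  have nC: "1 \<le> card C" using Cne finite_subset[OF C] by (simp add: Suc_le_eq card_gt_0_iff)
  have nCm: "card C \<le> m" using card_mono[OF _ C] by simp
  define G where "G w1 w2 w3 = (if dot3 m (a,b,c) (gen w1 w2 w3 False) \<noteq> 0 then 1 else 0)
      + (if dot3 m (a,b,c) (gen w1 w2 w3 True) \<noteq> 0 then 1 else (0::nat))" for w1 w2 w3
  have tot: "card {g\<in>N4 m A B C. dot3 m (a,b,c) g \<noteq> 0} =
     (\<Sum>w1\<in>Delta_star m A. \<Sum>w2\<in>Delta m B. \<Sum>w3\<in>Delta_c m C. G w1 w2 w3)"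
    unfolding cnt_N4[OF AB A B] sum_Param G_def by (simp add: genp_def)
  define TGT where "TGT = (q - 1) * ((q ^ m - q ^ card C) * q ^ (card A + card B - 1))"
  have "TGT \<le> (\<Sum>w1\<in>Delta_star m A. \<Sum>w2\<in>Delta m B. \<Sum>w3\<in>Delta_c m C. G w1 w2 w3)"
  proof (cases "\<exists>i\<in>B. a i \<noteq> 0")
    case True
    then obtain i where i: "i \<in> B" "a i \<noteq> 0" by blast
    have inner: "2 * (q ^ card B - q ^ (card B - 1)) \<le> (\<Sum>w2\<in>Delta m B. G w1 w2 w3)" for w1 w3
    proof -
      define K where "K e = ((if e then dotv m a w1 else 0) + dotv m b w3 + dotv m c w1)" for e
      have "(\<Sum>w2\<in>Delta m B. G w1 w2 w3) = (\<Sum>w2\<in>Delta m B. (if dotv m a w2 + K False \<noteq> 0 then 1 else 0)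
            + (if dotv m a w2 + K True \<noteq> 0 then 1 else 0))"
        unfolding G_def K_def dot3_gen by simp
      also have "\<dots> = (\<Sum>w2\<in>Delta m B. (if dotv m a w2 + K False \<noteq> 0 then 1 else 0))
            + (\<Sum>w2\<in>Delta m B. (if dotv m a w2 + K True \<noteq> 0 then 1 else 0))"
        by (rule sum.distrib)
      also have "\<dots> = 2 * (q ^ card B - q ^ (card B - 1))"
        using sum_nonzero[of B m i a "K False", OF B i] sum_nonzero[of B m i a "K True", OF B i] unfolding q_def by simp
      finally show ?thesis by simp
    qed
    have "card (Delta_star m A :: (nat \<Rightarrow> 'a) set) * card (Delta_c m C :: (nat \<Rightarrow> 'a) set) * (2 * (q ^ card B - q ^ (card B - 1)))
        \<le> (\<Sum>w1\<in>Delta_star m A. \<Sum>w2\<in>Delta m B. \<Sum>w3\<in>Delta_c m C. G w1 w2 w3)"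
      by (rule sum_swap_lower[OF finite_Delta[OF B] finite_Delta_c]) (rule inner)
    moreover have "TGT \<le> card (Delta_star m A :: (nat \<Rightarrow> 'a) set) * card (Delta_c m C :: (nat \<Rightarrow> 'a) set) * (2 * (q ^ card B - q ^ (card B - 1)))"
      unfolding card_Delta_star[OF A] card_Delta_c[OF C] TGT_def q_def[symmetric]
      using arith1[OF q2 nA nB, of "q ^ m - q ^ card C"] by (simp add: ac_simps)
    ultimately show ?thesis by linarith
  next
    case notB: False
    have a2: "dotv m a w2 = 0" if "w2 \<in> Delta m B" for w2
      using dotv_Delta_zero[OF B that] notB by blast
    show ?thesis
    proof (cases "(\<exists>i\<in>A. c i \<noteq> 0) \<or> (\<exists>i\<in>A. a i + c i \<noteq> 0)")
      case True
      have inner: "q ^ card A - q ^ (card A - 1) \<le> (\<Sum>w1\<in>Delta_star m A. G w1 w2 w3)" if w2: "w2 \<in> Delta m B" for w2 w3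
      proof -
        have "G w1 w2 w3 = (if dotv m c w1 + dotv m b w3 \<noteq> 0 then 1 else 0)
             + (if dotv m (\<lambda>i. a i + c i) w1 + dotv m b w3 \<noteq> 0 then 1 else 0)" for w1
          unfolding G_def dot3_gen dotv_add a2[OF w2] by (simp add: ac_simps)
        hence "(\<Sum>w1\<in>Delta_star m A. G w1 w2 w3) = (\<Sum>w1\<in>Delta_star m A. (if dotv m c w1 + dotv m b w3 \<noteq> 0 then 1 else 0)
             + (if dotv m (\<lambda>i. a i + c i) w1 + dotv m b w3 \<noteq> 0 then 1 else 0))" by simp
        thus ?thesis using pair_bound[OF A nA, of c "\<lambda>i. a i + c i" "dotv m b w3"] True unfolding q_def by simp
      qed
      have "card (Delta m B :: (nat \<Rightarrow> 'a) set) * card (Delta_c m C :: (nat \<Rightarrow> 'a) set) * (q ^ card A - q ^ (card A - 1))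
        \<le> (\<Sum>w1\<in>Delta_star m A. \<Sum>w2\<in>Delta m B. \<Sum>w3\<in>Delta_c m C. G w1 w2 w3)"
        by (rule sum_outer_lower[OF finite_Delta_star[OF A] finite_Delta[OF B] finite_Delta_c]) (rule inner)
      moreover have "TGT \<le> card (Delta m B :: (nat \<Rightarrow> 'a) set) * card (Delta_c m C :: (nat \<Rightarrow> 'a) set) * (q ^ card A - q ^ (card A - 1))"
        unfolding card_Delta[OF B] card_Delta_c[OF C] TGT_def q_def[symmetric]
        using arith2[of "card A" q "q ^ m - q ^ card C" "card B"] nA by (simp add: ac_simps)
      ultimately show ?thesis by linarith
    next
      case False
      hence c0: "\<forall>i\<in>A. c i = 0" and a0: "\<forall>i\<in>A. a i = 0" by auto
      have bnz: "\<exists>i\<in>{1..m}. b i \<noteq> 0" using nz notB False by blast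
      then obtain i where i: "i \<in> {1..m}" "b i \<noteq> 0" by blast
      define M0 where "M0 = (q ^ m - q ^ (m - 1)) - (q ^ card C - q ^ (card C - 1))"
      have inner: "2 * M0 \<le> (\<Sum>w3\<in>Delta_c m C. G w1 w2 w3)" if w1: "w1 \<in> Delta_star m A" and w2: "w2 \<in> Delta m B" for w1 w2
      proof -
        have w1': "w1 \<in> Delta m A" using w1 by (simp add: Delta_star_def)
        have "G w1 w2 w3 = 2 * (if dotv m b w3 + 0 \<noteq> 0 then 1 else 0)" for w3
          unfolding G_def dot3_gen a2[OF w2] dotv_Delta_zero[OF A w1' c0] dotv_Delta_zero[OF A w1' a0] by simp
        hence "(\<Sum>w3\<in>Delta_c m C. G w1 w2 w3) = 2 * (\<Sum>w3\<in>Delta_c m C. if dotv m b w3 + 0 \<noteq> 0 then 1 else 0)"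
          by (simp add: sum_distrib_left)
        also have "(\<Sum>w3\<in>Delta_c m C. if dotv m b w3 + 0 \<noteq> 0 then 1 else 0 :: nat) =
            (\<Sum>w3\<in>fvec m. if dotv m b w3 + 0 \<noteq> 0 then 1 else 0) - (\<Sum>w3\<in>(Delta m C :: (nat \<Rightarrow> 'a) set). if dotv m b w3 + 0 \<noteq> 0 then 1 else 0)"
          by (rule sum_DCc[OF C, where f = "\<lambda>w3. if dotv m b w3 + 0 \<noteq> 0 then 1 else 0" and 'a='a])
        also have "(\<Sum>w3\<in>(fvec m :: (nat \<Rightarrow> 'a) set). if dotv m b w3 + 0 \<noteq> 0 then 1 else 0 :: nat) = q ^ m - q ^ (m - 1)"
          using sum_nonzero[of "{1..m}" m i b 0] i unfolding fvec_Delta q_def by simp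
        also have "(\<Sum>w3\<in>(Delta m C :: (nat \<Rightarrow> 'a) set). if dotv m b w3 + 0 \<noteq> 0 then 1 else 0 :: nat) \<le> q ^ card C - q ^ (card C - 1)"
        proof (cases "\<exists>j\<in>C. b j \<noteq> 0")
          case True
          then obtain j where "j \<in> C" "b j \<noteq> 0" by blast
          thus ?thesis using sum_nonzero[OF C, of j b 0] unfolding q_def by simp
        next
          case False
          thus ?thesis using sum_nonzero_triv[OF C, of b 0] by simp
        qed
        ultimately show ?thesis unfolding M0_def by linarith
      qed
      have "card (Delta_star m A :: (nat \<Rightarrow> 'a) set) * card (Delta m B :: (nat \<Rightarrow> 'a) set) * (2 * M0)
        \<le> (\<Sum>w1\<in>Delta_star m A. \<Sum>w2\<in>Delta m B. \<Sum>w3\<in>Delta_c m C. G w1 w2 w3)"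
        by (rule sum_inner_lower) (rule inner)
      moreover have "TGT \<le> card (Delta_star m A :: (nat \<Rightarrow> 'a) set) * card (Delta m B :: (nat \<Rightarrow> 'a) set) * (2 * M0)"
        unfolding card_Delta_star[OF A] card_Delta[OF B] TGT_def q_def[symmetric] M0_def
        using arith3[OF q2 nA nC nCm, of "card B"] by (simp add: ac_simps)
      ultimately show ?thesis by linarith
    qed
  qed
  thus ?thesis unfolding tot TGT_def q_def .
qed

definition nzc :: "nat \<Rightarrow> nat set \<Rightarrow> nat set \<Rightarrow> ('a::ring_1) vec3 \<Rightarrow> bool" where
  "nzc m A B x \<longleftrightarrow> (case x of (a,b,c) \<Rightarrow>
     (\<exists>i\<in>B. a i \<noteq> 0) \<or> (\<exists>i\<in>A. c i \<noteq> 0) \<or> (\<exists>i\<in>A. a i + c i \<noteq> 0) \<or> (\<exists>i\<in>{1..m}. b i \<noteq> 0))"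

definition cw :: "nat \<Rightarrow> ('a::comm_ring_1) vec3 set \<Rightarrow> 'a vec3 \<Rightarrow> ('a vec3 \<Rightarrow> 'a)" where
  "cw m Nbar x = (\<lambda>g. if g \<in> Nbar then dot3 m x g else 0)"

definition sub3 :: "('a::ring_1) vec3 \<Rightarrow> 'a vec3 \<Rightarrow> 'a vec3" where
  "sub3 x y = ((\<lambda>i. fst x i - fst y i), (\<lambda>i. fst (snd x) i - fst (snd y) i), (\<lambda>i. snd (snd x) i - snd (snd y) i))"

lemma dot3_sub: "dot3 m (sub3 x y) g = dot3 m x g - dot3 m y g"
  by (simp add: dot3_def sub3_def sum_subtractf algebra_simps)

lemma dot3_smult: "dot3 m x (smult3 a g) = a * dot3 m x g"
  by (simp add: dot3_def smult3_def sum_distrib_left algebra_simps)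

lemma code_cw: "code m Nbar = {cw m Nbar x | x. x \<in> fvec m \<times> fvec m \<times> fvec m}"
  by (simp add: code_def cw_def)

lemma sub3_fvec: "x \<in> fvec m \<times> fvec m \<times> fvec m \<Longrightarrow> y \<in> fvec m \<times> fvec m \<times> fvec m \<Longrightarrow> sub3 x y \<in> fvec m \<times> fvec m \<times> fvec m"
  by (auto simp: sub3_def fvec_def)

locale setting =
  fixes m :: nat and A B C :: "nat set" and Nbar :: "('a::{finite,field}) vec3 set"
  assumes AB: "A \<inter> B = {}" and A: "A \<subseteq> {1..m}" and B: "B \<subseteq> {1..m}" and C: "C \<subseteq> {1..m}"
    and nA: "2 \<le> card A" and Bne: "B \<noteq> {}" and Cne: "C \<noteq> {}" and Cm: "C \<noteq> {1..m}"
    and rep: "is_projective_rep (N4 m A B C) Nbar"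
begin

abbreviation "N \<equiv> (N4 m A B C :: 'a vec3 set)"

definition "dd = (card (UNIV::'a set) ^ m - card (UNIV::'a set) ^ card C) * card (UNIV::'a set) ^ (card A + card B - 1)"

lemma q2: "2 \<le> card (UNIV::'a set)" by (rule card_UNIV_ge2)

lemma Nbar_sub: "Nbar \<subseteq> N" using rep by (simp add: is_projective_rep_def)

lemma finN: "finite N" by (rule finite_N4[OF A B])

lemma finNbar: "finite Nbar" using Nbar_sub finN finite_subset by blast

lemma cardC_less: "card C < m"
proof -
  have "C \<subset> {1..m}" using C Cm by blast
  thus ?thesis using psubset_card_mono[of "{1..m}" C] by simp
qed

lemma dd_pos: "0 < dd"
proof -
  have "card (UNIV::'a set) ^ card C < card (UNIV::'a set) ^ m" using cardC_less q2 by (intro power_strict_increasing) auto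
  moreover have "0 < card (UNIV::'a set) ^ (card A + card B - 1)" using q2 by simp
  ultimately show ?thesis unfolding dd_def by simp
qed

lemma cnt_Nbar:
  "card {g\<in>N. dot3 m x g \<noteq> 0} = (card (UNIV::'a set) - 1) * card {g\<in>Nbar. dot3 m x g \<noteq> 0}"
  by (rule orbit_count[OF rep finN N4_closed N4_nz]) (auto simp: dot3_smult)

lemma weight_ge:
  assumes "nzc m A B x"
  shows "dd \<le> card {g\<in>Nbar. dot3 m x g \<noteq> 0}"
proof -
  obtain a b c where x: "x = (a,b,c)" by (cases x) auto
  have "(card (UNIV::'a set) - 1) * dd \<le> card {g\<in>N. dot3 m x g \<noteq> 0}"
    unfolding dd_def x using weight_lower[OF AB A B C nA Bne Cne] assms unfolding x nzc_def by simp
  hence "(card (UNIV::'a set) - 1) * dd \<le> (card (UNIV::'a set) - 1) * card {g\<in>Nbar. dot3 m x g \<noteq> 0}" unfolding cnt_Nbar .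
  moreover have "0 < card (UNIV::'a set) - 1" using q2 by simp
  ultimately show ?thesis by simp
qed

lemma zero_on_N:
  assumes "\<not> nzc m A B x" "g \<in> N"
  shows "dot3 m x g = 0"
proof -
  obtain a b c where x: "x = (a,b,c)" by (cases x) auto
  have z: "\<forall>i\<in>B. a i = 0" "\<forall>i\<in>A. c i = 0" "\<forall>i\<in>A. a i = 0" "\<forall>i\<in>{1..m}. b i = 0"
    using assms(1) unfolding x nzc_def by auto
  obtain w1 w2 w3 e where g: "g = gen w1 w2 w3 e" and w: "w1 \<in> Delta_star m A" "w2 \<in> Delta m B" "w3 \<in> Delta_c m C"
    using assms(2) unfolding N4_gen Param_def genp_def by auto
  have w1: "w1 \<in> Delta m A" using w by (simp add: Delta_star_def)
  have "dotv m b w3 = 0" using z(4) by (simp add: dotv_def)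
  thus ?thesis unfolding x g dot3_gen
    using dotv_Delta_zero[OF B w(2) z(1)] dotv_Delta_zero[OF A w1 z(2)] dotv_Delta_zero[OF A w1 z(3)] by simp
qed

definition ev :: "nat \<Rightarrow> nat \<Rightarrow> 'a" where "ev i = (\<lambda>j. if j = i then 1 else 0)"

lemma dotv_ev: "i \<in> {1..m} \<Longrightarrow> dotv m (ev i) v = v i"
proof -
  assume i: "i \<in> {1..m}"
  have "\<And>j. ev i j * v j = (if j = i then v i else 0)" by (simp add: ev_def)
  hence "dotv m (ev i) v = (\<Sum>j\<in>{1..m}. if j = i then v i else 0)" by (simp add: dotv_def)
  thus ?thesis using i by simp
qed

lemma ev_fvec: "i \<in> {1..m} \<Longrightarrow> ev i \<in> fvec m"
  by (simp add: fvec_def ev_def)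

lemma weight_eq:
  assumes i: "i \<in> A"
  shows "card {g\<in>Nbar. dot3 m (ev i, (\<lambda>_. 0), (\<lambda>_. 0)) g \<noteq> 0} = dd"
proof -
  have im: "i \<in> {1..m}" using i A by auto
  have iB: "i \<notin> B" using i AB by auto
  define H where "H w1 = (if dotv m (ev i) w1 + 0 \<noteq> 0 then 1 else (0::nat))" for w1 :: "nat \<Rightarrow> 'a"
  have G: "(if dot3 m (ev i, (\<lambda>_. 0), (\<lambda>_. 0)) (gen w1 w2 w3 False) \<noteq> 0 then 1 else 0)
      + (if dot3 m (ev i, (\<lambda>_. 0), (\<lambda>_. 0)) (gen w1 w2 w3 True) \<noteq> 0 then 1 else (0::nat)) = H w1"
    if "w2 \<in> Delta m B" for w1 w2 w3
  proof -
    have "w2 i = 0" using that iB B by (simp add: Delta_alt)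
    thus ?thesis unfolding dot3_gen H_def dotv_ev[OF im] by (simp add: dotv_def)
  qed
  have "card {g\<in>N. dot3 m (ev i, (\<lambda>_. 0), (\<lambda>_. 0)) g \<noteq> 0}
      = (\<Sum>w1\<in>Delta_star m A. \<Sum>w2\<in>(Delta m B :: (nat \<Rightarrow> 'a) set). \<Sum>w3\<in>(Delta_c m C :: (nat \<Rightarrow> 'a) set). H w1)"
    unfolding cnt_N4[OF AB A B] sum_Param genp_def by (simp add: G cong: sum.cong)
  also have "\<dots> = card (Delta m B :: (nat \<Rightarrow> 'a) set) * card (Delta_c m C :: (nat \<Rightarrow> 'a) set) * (\<Sum>w1\<in>Delta_star m A. H w1)"
    by (simp add: sum_distrib_left sum_distrib_right ac_simps)
  also have "(\<Sum>w1\<in>Delta_star m A. H w1) = card (UNIV::'a set) ^ card A - card (UNIV::'a set) ^ (card A - 1)"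
  proof -
    have "(\<Sum>w1\<in>Delta_star m A. H w1) + 0 = (\<Sum>w\<in>(Delta m A :: (nat \<Rightarrow> 'a) set). if dotv m (ev i) w + 0 \<noteq> 0 then 1 else 0)"
      using sum_star[OF A, of "ev i" 0] unfolding H_def by simp
    also have "\<dots> = card (UNIV::'a set) ^ card A - card (UNIV::'a set) ^ (card A - 1)"
      by (rule sum_nonzero[OF A i]) (simp add: ev_def)
    finally show ?thesis by simp
  qed
  finally have "card {g\<in>N. dot3 m (ev i, (\<lambda>_. 0), (\<lambda>_. 0)) g \<noteq> 0} =
      card (UNIV::'a set) ^ card B * (card (UNIV::'a set) ^ m - card (UNIV::'a set) ^ card C) * (card (UNIV::'a set) ^ card A - card (UNIV::'a set) ^ (card A - 1))"
    unfolding card_Delta[OF B] card_Delta_c[OF C] .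
  also have "\<dots> = (card (UNIV::'a set) - 1) * dd"
  proof -
    obtain a' where a': "card A = Suc a'" using nA by (cases "card A") auto
    have e1: "card (UNIV::'a set) ^ (card A + card B - 1) = card (UNIV::'a set) ^ card B * card (UNIV::'a set) ^ a'" by (simp add: a' power_add)
    have e2: "card (UNIV::'a set) ^ card A - card (UNIV::'a set) ^ (card A - 1) = (card (UNIV::'a set) - 1) * card (UNIV::'a set) ^ a'" by (simp add: a' diff_mult_distrib)
    show ?thesis unfolding dd_def e1 e2 by (simp add: ac_simps)
  qed
  finally have "(card (UNIV::'a set) - 1) * card {g\<in>Nbar. dot3 m (ev i, (\<lambda>_. 0), (\<lambda>_. 0)) g \<noteq> 0} = (card (UNIV::'a set) - 1) * dd"
    unfolding cnt_Nbar .
  moreover have "0 < card (UNIV::'a set) - 1" using q2 by simp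
  ultimately show ?thesis by simp
qed

end

lemma sum_fun_apply: "(sum F I) g = (\<Sum>i\<in>I. F i g)"
  by (induction I rule: infinite_finite_induct) auto

lemma hdist_le: "finite I \<Longrightarrow> hdist I c c' \<le> card I"
  unfolding hdist_def by (rule card_mono) auto

context setting
begin

lemma min_dist_eq: "min_dist Nbar (code m Nbar) = dd"
proof -
  define S where "S = {hdist Nbar c c' | c c'. c \<in> code m Nbar \<and> c' \<in> code m Nbar \<and> c \<noteq> c'}"
  have lower: "dd \<le> s" if sS: "s \<in> S" for s
  proof -
    obtain c c' where s: "s = hdist Nbar c c'" and cc: "c \<in> code m Nbar" "c' \<in> code m Nbar" "c \<noteq> c'"
      using sS unfolding S_def by blast
    obtain x where x: "c = cw m Nbar x" "x \<in> fvec m \<times> fvec m \<times> fvec m" using cc(1) unfolding code_cw by blast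
    obtain x' where x': "c' = cw m Nbar x'" "x' \<in> fvec m \<times> fvec m \<times> fvec m" using cc(2) unfolding code_cw by blast
    have eqset: "{g\<in>Nbar. c g \<noteq> c' g} = {g\<in>Nbar. dot3 m (sub3 x x') g \<noteq> 0}"
      unfolding x x' cw_def dot3_sub by auto
    show ?thesis
    proof (cases "nzc m A B (sub3 x x')")
      case True
      thus ?thesis unfolding s hdist_def eqset using weight_ge by blast
    next
      case False
      have "c g = c' g" for g
      proof (cases "g \<in> Nbar")
        case True
        hence "dot3 m (sub3 x x') g = 0" using zero_on_N[OF False] Nbar_sub by blast
        thus ?thesis using True unfolding x x' cw_def dot3_sub by simp
      next
        case False thus ?thesis unfolding x x' cw_def by simp
      qed
      hence "c = c'" by auto
      thus ?thesis using cc by simp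
    qed
  qed
  obtain i where i: "i \<in> A" using nA by (cases "A = {}") auto
  have im: "i \<in> {1..m}" using i A by auto
  define x0 where "x0 = (ev i, (\<lambda>_::nat. 0::'a), (\<lambda>_::nat. 0::'a))"
  define x1 where "x1 = ((\<lambda>_::nat. 0::'a), (\<lambda>_::nat. 0::'a), (\<lambda>_::nat. 0::'a))"
  have x0f: "x0 \<in> fvec m \<times> fvec m \<times> fvec m" unfolding x0_def using ev_fvec[OF im] by (simp add: fvec_def)
  have x1f: "x1 \<in> fvec m \<times> fvec m \<times> fvec m" unfolding x1_def by (simp add: fvec_def)
  have c0: "cw m Nbar x0 \<in> code m Nbar" unfolding code_cw using x0f by blast
  have c1: "cw m Nbar x1 \<in> code m Nbar" unfolding code_cw using x1f by blast
  have d1: "dot3 m x1 g = 0" for g unfolding x1_def dot3_def by simp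
  have hd: "hdist Nbar (cw m Nbar x0) (cw m Nbar x1) = dd"
  proof -
    have "{g\<in>Nbar. cw m Nbar x0 g \<noteq> cw m Nbar x1 g} = {g\<in>Nbar. dot3 m x0 g \<noteq> 0}"
      unfolding cw_def d1 by auto
    thus ?thesis unfolding hdist_def x0_def using weight_eq[OF i] by simp
  qed
  have ne: "cw m Nbar x0 \<noteq> cw m Nbar x1"
  proof
    assume "cw m Nbar x0 = cw m Nbar x1"
    hence "hdist Nbar (cw m Nbar x0) (cw m Nbar x1) = 0" unfolding hdist_def by simp
    thus False using hd dd_pos by simp
  qed
  have dS: "dd \<in> S" unfolding S_def using hd ne c0 c1 by (metis (mono_tags, lifting) mem_Collect_eq)
  have finS: "finite S"
  proof (rule finite_subset)
    show "S \<subseteq> {..card Nbar}" unfolding S_def using hdist_le[OF finNbar] by auto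
  qed simp
  have "Min S = dd" by (rule Min_eqI[OF finS]) (use lower dS in auto)
  thus ?thesis unfolding min_dist_def S_def .
qed

end

definition coord :: "nat \<times> nat \<Rightarrow> ('a::zero) vec3 \<Rightarrow> 'a" where
  "coord i g = (case i of (k,j) \<Rightarrow> if k = 1 then fst g j else if k = 2 then fst (snd g) j else snd (snd g) j)"

lemma sum_single: "sum f ({k} \<times> S) = (\<Sum>j\<in>S. f (k,j))"
  by (simp add: sum_prod)

lemma dot3_dotv: "dot3 m (a,b,c) g = dotv m a (fst g) + dotv m b (fst (snd g)) + dotv m c (snd (snd g))"
  by (simp add: dot3_def dotv_def sum.distrib)

lemma dotv_zero_left: "dotv m (\<lambda>_. 0) v = 0"
  by (simp add: dotv_def)

context setting
begin

definition "II = ({1::nat} \<times> (A \<union> B)) \<union> ({2} \<times> {1..m}) \<union> ({3} \<times> A)"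

definition "EE i = (\<lambda>g. if g \<in> Nbar then coord i g else (0::'a))"

definition "Xc coef = ((\<lambda>j. if (1,j) \<in> II then coef (1,j) else (0::'a)),
   (\<lambda>j. if (2,j) \<in> II then coef (2,j) else 0), (\<lambda>j. if (3,j) \<in> II then coef (3,j) else 0))"

lemma finA: "finite A" using A finite_subset by blast
lemma finB: "finite B" using B finite_subset by blast

lemma finII: "finite II" unfolding II_def using finA finB by simp

lemma sum_II: "sum f II = (\<Sum>j\<in>A \<union> B. f (1,j)) + (\<Sum>j\<in>{1..m}. f (2,j)) + (\<Sum>j\<in>A. f (3,j))"
proof -
  have d1: "({1::nat} \<times> (A \<union> B)) \<inter> ({2} \<times> {1..m}) = {}" by auto
  have d2: "(({1::nat} \<times> (A \<union> B)) \<union> ({2} \<times> {1..m})) \<inter> ({3} \<times> A) = {}" by auto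
  have "sum f II = sum f (({1::nat} \<times> (A \<union> B)) \<union> ({2} \<times> {1..m})) + sum f ({3} \<times> A)"
    unfolding II_def by (rule sum.union_disjoint) (use finA finB d2 in auto)
  also have "sum f (({1::nat} \<times> (A \<union> B)) \<union> ({2} \<times> {1..m})) = sum f ({1::nat} \<times> (A \<union> B)) + sum f ({2} \<times> {1..m})"
    by (rule sum.union_disjoint) (use finA finB d1 in auto)
  finally show ?thesis by (simp add: sum_single)
qed

lemma card_II: "card II = m + 2 * card A + card B"
proof -
  have "card II = (\<Sum>j\<in>A \<union> B. 1) + (\<Sum>j\<in>{1..m}. 1) + (\<Sum>j\<in>A. (1::nat))"
    unfolding card_eq_sum sum_II ..
  also have "\<dots> = card (A \<union> B) + m + card A" by simp
  also have "card (A \<union> B) = card A + card B" using card_Un_disjoint[OF finA finB AB] .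
  finally show ?thesis by simp
qed

lemma dot3_II:
  assumes g: "g \<in> N"
  shows "dot3 m x g = (\<Sum>i\<in>II. coord i x * coord i g)"
proof -
  obtain a b c where x: "x = (a,b,c)" by (cases x) auto
  obtain w1 w2 w3 e where gg: "g = gen w1 w2 w3 e" and w: "w1 \<in> Delta_star m A" "w2 \<in> Delta m B" "w3 \<in> Delta_c m C"
    using g unfolding N4_gen Param_def genp_def by auto
  have w1: "w1 \<in> Delta m A" using w by (simp add: Delta_star_def)
  have AB': "A \<union> B \<subseteq> {1..m}" using A B by auto
  have u: "fst g \<in> Delta m (A \<union> B)" using w1 w(2) A B unfolding gg gen_def by (auto simp: Delta_alt[OF AB'] Delta_alt[OF A] Delta_alt[OF B])
  have "dot3 m x g = (\<Sum>j\<in>A \<union> B. a j * fst g j) + (\<Sum>j\<in>{1..m}. b j * fst (snd g) j) + (\<Sum>j\<in>A. c j * snd (snd g) j)"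
    unfolding x dot3_dotv dotv_Delta[OF AB' u] using dotv_Delta[OF A w1, of c] by (simp add: gg gen_def dotv_def)
  also have "\<dots> = (\<Sum>i\<in>II. coord i x * coord i g)"
    unfolding sum_II by (simp add: coord_def x)
  finally show ?thesis .
qed

lemma coord_Xc: "i \<in> II \<Longrightarrow> coord i (Xc coef) = coef i"
  by (cases i) (auto simp: coord_def Xc_def II_def)

lemma KER:
  assumes "\<forall>g\<in>Nbar. (\<Sum>i\<in>II. coef i * coord i g) = 0"
  shows "\<forall>i\<in>II. coef i = 0"
proof -
  have "dot3 m (Xc coef) g = 0" if g: "g \<in> Nbar" for g
  proof -
    have "dot3 m (Xc coef) g = (\<Sum>i\<in>II. coord i (Xc coef) * coord i g)"
      using dot3_II[of g "Xc coef"] g Nbar_sub by blast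
    also have "\<dots> = (\<Sum>i\<in>II. coef i * coord i g)"
      by (rule sum.cong[OF refl]) (simp add: coord_Xc)
    also have "\<dots> = 0" using assms g by blast
    finally show ?thesis .
  qed
  hence E: "{g\<in>Nbar. dot3 m (Xc coef) g \<noteq> 0} = {}" by blast
  have "card {g\<in>Nbar. dot3 m (Xc coef) g \<noteq> 0} = 0" unfolding E by simp
  hence "\<not> nzc m A B (Xc coef)" using weight_ge dd_pos by fastforce
  hence z0: "\<forall>j\<in>B. fst (Xc coef) j = 0" "\<forall>j\<in>A. snd (snd (Xc coef)) j = 0"
      "\<forall>j\<in>A. fst (Xc coef) j + snd (snd (Xc coef)) j = 0" "\<forall>j\<in>{1..m}. fst (snd (Xc coef)) j = 0"
    unfolding nzc_def by (auto split: prod.splits)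
  have z1: "\<forall>j\<in>A \<union> B. fst (Xc coef) j = 0"
  proof
    fix j assume "j \<in> A \<union> B"
    thus "fst (Xc coef) j = 0"
    proof
      assume "j \<in> A" thus ?thesis using z0(2,3) by fastforce
    next
      assume "j \<in> B" thus ?thesis using z0(1) by blast
    qed
  qed
  show ?thesis
  proof
    fix i assume i: "i \<in> II"
    show "coef i = 0"
    proof -
      have "coord i (Xc coef) = 0" using i z1 z0(2,4) unfolding II_def coord_def by auto
      thus ?thesis using coord_Xc[OF i] by simp
    qed
  qed
qed

lemma cw_span: "cw m Nbar x = (\<Sum>i\<in>II. fscale (coord i x) (EE i))"
proof
  fix g
  show "cw m Nbar x g = (\<Sum>i\<in>II. fscale (coord i x) (EE i)) g"
  proof (cases "g \<in> Nbar")
    case True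
    have "(\<Sum>i\<in>II. fscale (coord i x) (EE i)) g = (\<Sum>i\<in>II. coord i x * coord i g)"
      unfolding sum_fun_apply fscale_def EE_def using True by simp
    also have "\<dots> = dot3 m x g"
    proof -
      have gN: "g \<in> N" using True Nbar_sub by blast
      show ?thesis using dot3_II[OF gN, of x] by simp
    qed
    finally show ?thesis unfolding cw_def using True by simp
  next
    case False
    have "(\<Sum>i\<in>II. fscale (coord i x) (EE i)) g = 0"
      unfolding sum_fun_apply fscale_def EE_def using False by simp
    thus ?thesis unfolding cw_def using False by simp
  qed
qed

definition "UU i = (case i of (k,j) \<Rightarrow> (if k = 1 then ev j else (\<lambda>_. 0), if k = 2 then ev j else (\<lambda>_. 0), if k = 3 then ev j else (\<lambda>_. 0)))"

lemma EE_code: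
  assumes i: "i \<in> II"
  shows "EE i \<in> code m Nbar"
proof -
  obtain k j where kj: "i = (k,j)" by (cases i) auto
  have k: "k = 1 \<or> k = 2 \<or> k = 3" using i unfolding kj II_def by blast
  have "j \<in> A \<union> B \<union> {1..m}" using i unfolding kj II_def by blast
  hence j: "j \<in> {1..m}" using A B by blast
  have Uf: "UU i \<in> fvec m \<times> fvec m \<times> fvec m" unfolding UU_def kj using ev_fvec[OF j] by (auto simp: fvec_def)
  have dU: "dot3 m (UU i) g = coord i g" for g
  proof -
    obtain g1 g2 g3 where gg: "g = (g1,g2,g3)" by (cases g) auto
    show ?thesis
    proof (cases "k = 1")
      case True thus ?thesis unfolding UU_def kj gg
        by (simp add: dot3_dotv dotv_ev[OF j] dotv_zero_left coord_def)
    next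
      case k1: False
      show ?thesis
      proof (cases "k = 2")
        case True thus ?thesis using k1 unfolding UU_def kj gg
          by (simp add: dot3_dotv dotv_ev[OF j] dotv_zero_left coord_def)
      next
        case False
        hence "k = 3" using k k1 by simp
        thus ?thesis unfolding UU_def kj gg
          by (simp add: dot3_dotv dotv_ev[OF j] dotv_zero_left coord_def)
      qed
    qed
  qed
  have "EE i = cw m Nbar (UU i)" by (rule ext) (simp add: EE_def cw_def dU)
  moreover have "cw m Nbar (UU i) \<in> code m Nbar" unfolding code_cw by (intro CollectI exI[where x="UU i"] conjI refl Uf)
  ultimately show ?thesis by simp
qed

lemma EE_inj: "inj_on EE II"
proof (rule inj_onI)
  fix i1 i2 assume i: "i1 \<in> II" "i2 \<in> II" and e: "EE i1 = EE i2"
  show "i1 = i2"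
  proof (rule ccontr)
    assume ne: "i1 \<noteq> i2"
    define coef where "coef i = (if i = i1 then 1 else if i = i2 then -1 else (0::'a))" for i
    have "(\<Sum>i\<in>II. coef i * coord i g) = 0" if g: "g \<in> Nbar" for g
    proof -
      have "\<And>i. coef i * coord i g = (if i = i1 then coord i1 g else 0) - (if i = i2 then coord i2 g else 0)"
        unfolding coef_def using ne by auto
      hence "(\<Sum>i\<in>II. coef i * coord i g) = (\<Sum>i\<in>II. (if i = i1 then coord i1 g else 0)) - (\<Sum>i\<in>II. (if i = i2 then coord i2 g else 0))"
        by (simp add: sum_subtractf)
      also have "\<dots> = coord i1 g - coord i2 g" using i finII by simp
      also have "\<dots> = 0" using fun_cong[OF e, of g] g unfolding EE_def by simp
      finally show ?thesis .
    qed
    hence "coef i1 = 0" using KER i by blast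
    thus False unfolding coef_def by simp
  qed
qed

lemma code_dim_eq: "code_dim (code m Nbar) = m + 2 * card A + card B"
proof -
  interpret V: vector_space "fscale :: 'a \<Rightarrow> ('a vec3 \<Rightarrow> 'a) \<Rightarrow> ('a vec3 \<Rightarrow> 'a)"
    by (rule vector_space_fscale)
  have sub1: "code m Nbar \<subseteq> V.span (EE ` II)"
  proof
    fix c assume "c \<in> code m Nbar"
    then obtain x where x: "c = cw m Nbar x" unfolding code_cw by blast
    show "c \<in> V.span (EE ` II)" unfolding x cw_span
      by (intro V.span_sum V.span_scale V.span_base) auto
  qed
  have sub2: "EE ` II \<subseteq> V.span (code m Nbar)"
    using EE_code V.span_superset by blast
  have sp: "V.span (code m Nbar) = V.span (EE ` II)" using V.span_eq sub1 sub2 by blast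
  have ind: "V.independent (EE ` II)"
  proof (rule V.independent_if_scalars_zero)
    show "finite (EE ` II)" using finII by simp
    fix f v assume s: "(\<Sum>x\<in>EE ` II. fscale (f x) x) = 0" and v: "v \<in> EE ` II"
    have "(\<Sum>i\<in>II. fscale (f (EE i)) (EE i)) = 0"
      using s sum.reindex[OF EE_inj, of "\<lambda>x. fscale (f x) x"] by simp
    hence "\<forall>g\<in>Nbar. (\<Sum>i\<in>II. f (EE i) * coord i g) = 0"
    proof (intro ballI)
      fix g assume g: "g \<in> Nbar" and h: "(\<Sum>i\<in>II. fscale (f (EE i)) (EE i)) = 0"
      have "(\<Sum>i\<in>II. fscale (f (EE i)) (EE i)) g = 0" using h by simp
      hence "(\<Sum>i\<in>II. fscale (f (EE i)) (EE i) g) = 0" unfolding sum_fun_apply .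
      thus "(\<Sum>i\<in>II. f (EE i) * coord i g) = 0" using g unfolding fscale_def EE_def by simp
    qed
    hence "\<forall>i\<in>II. f (EE i) = 0" by (rule KER)
    thus "f v = 0" using v by blast
  qed
  have "code_dim (code m Nbar) = V.dim (code m Nbar)" unfolding code_dim_def ..
  also have "\<dots> = V.dim (V.span (code m Nbar))" by simp
  also have "\<dots> = V.dim (EE ` II)" unfolding sp by simp
  also have "\<dots> = card (EE ` II)" by (rule V.dim_eq_card_independent[OF ind])
  also have "\<dots> = card II" by (rule card_image[OF EE_inj])
  finally show ?thesis unfolding card_II .
qed

end

lemma lc_comp:
  fixes r :: "nat \<Rightarrow> ('a::comm_ring_1) vec3" and cs :: "nat \<Rightarrow> 'a" and f :: "'a vec3 \<Rightarrow> 'a" and n :: nat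
  defines "cc \<equiv> (\<lambda>s. \<Sum>j\<in>{j\<in>{..<n}. r j = s}. cs j)"
  shows "(\<Sum>s\<in>r ` {..<n}. cc s * f s) = (\<Sum>j<n. cs j * f (r j))"
proof -
  have "(\<Sum>j<n. cs j * f (r j)) = (\<Sum>s\<in>r ` {..<n}. \<Sum>j\<in>{j. j \<in> {..<n} \<and> r j = s}. cs j * f (r j))"
    by (rule sum.image_gen) simp
  also have "\<dots> = (\<Sum>s\<in>r ` {..<n}. \<Sum>j\<in>{j\<in>{..<n}. r j = s}. cs j * f s)"
    by (rule sum.cong[OF refl], rule sum.cong) auto
  also have "\<dots> = (\<Sum>s\<in>r ` {..<n}. cc s * f s)"
    unfolding cc_def by (simp add: sum_distrib_right)
  finally show ?thesis by simp
qed

lemma lc_list: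
  fixes r :: "nat \<Rightarrow> ('a::comm_ring_1) vec3" and cs :: "nat \<Rightarrow> 'a"
  assumes "g = ((\<lambda>i. \<Sum>j<n. cs j * fst (r j) i), (\<lambda>i. \<Sum>j<n. cs j * fst (snd (r j)) i), (\<lambda>i. \<Sum>j<n. cs j * snd (snd (r j)) i))"
  shows "lin_comb3 (r ` {..<n}) g"
proof -
  define cc where "cc = (\<lambda>s. \<Sum>j\<in>{j\<in>{..<n}. r j = s}. cs j)"
  have e1: "(\<Sum>s\<in>r ` {..<n}. cc s * fst s i) = (\<Sum>j<n. cs j * fst (r j) i)" for i
    unfolding cc_def by (rule lc_comp[where f="\<lambda>s. fst s i" and r=r and cs=cs and n=n])
  have e2: "(\<Sum>s\<in>r ` {..<n}. cc s * fst (snd s) i) = (\<Sum>j<n. cs j * fst (snd (r j)) i)" for i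
    unfolding cc_def by (rule lc_comp[where f="\<lambda>s. fst (snd s) i" and r=r and cs=cs and n=n])
  have e3: "(\<Sum>s\<in>r ` {..<n}. cc s * snd (snd s) i) = (\<Sum>j<n. cs j * snd (snd (r j)) i)" for i
    unfolding cc_def by (rule lc_comp[where f="\<lambda>s. snd (snd s) i" and r=r and cs=cs and n=n])
  show ?thesis unfolding lin_comb3_def
    by (rule exI[where x = cc]) (simp add: assms e1 e2 e3)
qed

context setting
begin

lemma repair_from_N:
  assumes g: "g \<in> Nbar"
    and hN: "\<And>j. j < n \<Longrightarrow> h j \<in> N"
    and np: "\<And>j a. j < n \<Longrightarrow> g \<noteq> smult3 a (h j)"
    and sm: "g = ((\<lambda>i. \<Sum>j<n. fst (h j) i), (\<lambda>i. \<Sum>j<n. fst (snd (h j)) i), (\<lambda>i. \<Sum>j<n. snd (snd (h j)) i))"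
  shows "\<exists>S. S \<subseteq> Nbar - {g} \<and> card S \<le> n \<and> lin_comb3 S g"
proof -
  have "\<forall>j\<in>{..<n}. \<exists>p. fst p \<in> Nbar \<and> snd p \<noteq> 0 \<and> fst p = smult3 (snd p) (h j)"
  proof
    fix j assume "j \<in> {..<n}"
    then obtain y a where "y \<in> Nbar" "a \<noteq> 0" "y = smult3 a (h j)" using rep_exists[OF rep hN] by blast
    thus "\<exists>p. fst p \<in> Nbar \<and> snd p \<noteq> 0 \<and> fst p = smult3 (snd p) (h j)" by (intro exI[of _ "(y,a)"]) simp
  qed
  then obtain P where P: "\<forall>j\<in>{..<n}. fst (P j) \<in> Nbar \<and> snd (P j) \<noteq> 0 \<and> fst (P j) = smult3 (snd (P j)) (h j)"
    by (metis bchoice)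
  define r where "r j = fst (P j)" for j
  define be where "be j = snd (P j)" for j
  have rN: "r j \<in> Nbar" and be0: "be j \<noteq> 0" and rh: "r j = smult3 (be j) (h j)" if "j < n" for j
    using P that unfolding r_def be_def by blast+
  have hr: "h j = smult3 (inverse (be j)) (r j)" if "j < n" for j
    using rh[OF that] be0[OF that] by (simp add: smult3_smult3 smult3_one)
  have rg: "r j \<noteq> g" if "j < n" for j using np[OF that] rh[OF that] by metis
  have "lin_comb3 (r ` {..<n}) g"
  proof (rule lc_list[where cs = "\<lambda>j. inverse (be j)"])
    have "\<And>j i. j \<in> {..<n} \<Longrightarrow> fst (h j) i = inverse (be j) * fst (r j) i"
        "\<And>j i. j \<in> {..<n} \<Longrightarrow> fst (snd (h j)) i = inverse (be j) * fst (snd (r j)) i"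
        "\<And>j i. j \<in> {..<n} \<Longrightarrow> snd (snd (h j)) i = inverse (be j) * snd (snd (r j)) i"
      using hr by (auto simp: smult3_def)
    thus "g = ((\<lambda>i. \<Sum>j<n. inverse (be j) * fst (r j) i), (\<lambda>i. \<Sum>j<n. inverse (be j) * fst (snd (r j)) i),
        (\<lambda>i. \<Sum>j<n. inverse (be j) * snd (snd (r j)) i))"
      unfolding sm by (auto intro!: sum.cong)
  qed
  moreover have "r ` {..<n} \<subseteq> Nbar - {g}"
  proof
    fix y assume "y \<in> r ` {..<n}"
    then obtain j where j: "j < n" "y = r j" by auto
    show "y \<in> Nbar - {g}" using rN[OF j(1)] rg[OF j(1)] j(2) by blast
  qed
  moreover have "card (r ` {..<n}) \<le> n" using card_image_le[of "{..<n}" r] by simp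
  ultimately show ?thesis by blast
qed

end

context setting
begin

lemma N_param:
  assumes "g \<in> N"
  obtains w1 w2 w3 e where "g = gen w1 w2 w3 e" "w1 \<in> Delta_star m A" "w2 \<in> Delta m B" "w3 \<in> Delta_c m C"
  using assms unfolding N4_gen Param_def genp_def by auto

lemma gen_N:
  assumes "w1 \<in> Delta_star m A" "w2 \<in> Delta m B" "w3 \<in> Delta_c m C"
  shows "gen w1 w2 w3 e \<in> N"
  unfolding N4_gen Param_def genp_def using assms
  by (intro image_eqI[where x="(w1,w2,w3,e)"]) auto

lemma Delta_c_nz:
  assumes "w3 \<in> Delta_c m C"
  obtains j1 where "j1 \<in> {1..m}" "j1 \<notin> C" "w3 j1 \<noteq> 0"
proof -
  have f: "w3 \<in> fvec m" and nd: "w3 \<notin> Delta m C" using assms by (auto simp: Delta_c_def)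
  hence "\<not> supp w3 \<subseteq> C" by (simp add: Delta_def)
  then obtain j1 where "w3 j1 \<noteq> 0" "j1 \<notin> C" by (auto simp: supp_def)
  moreover hence "j1 \<in> {1..m}" using f by (auto simp: fvec_def)
  ultimately show ?thesis using that by blast
qed

lemma Delta_c_intro:
  assumes "v \<in> fvec m" "j1 \<notin> C" "v j1 \<noteq> 0"
  shows "v \<in> Delta_c m C"
  using assms by (auto simp: Delta_c_def Delta_def supp_def)

lemma Delta_star_intro:
  assumes "\<And>i. i \<notin> A \<Longrightarrow> v i = 0" "v j \<noteq> 0"
  shows "v \<in> Delta_star m A"
proof -
  have "v \<in> Delta m A" using assms(1) by (simp add: Delta_alt[OF A])
  moreover have "v \<noteq> (\<lambda>_. 0)" using assms(2) by auto
  ultimately show ?thesis by (simp add: Delta_star_def)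
qed

lemma Delta_A_zero: "w \<in> Delta_star m A \<Longrightarrow> i \<notin> A \<Longrightarrow> w i = 0"
  by (simp add: Delta_star_def Delta_alt[OF A])

lemma fvec_zero: "v \<in> fvec m \<Longrightarrow> i \<notin> {1..m} \<Longrightarrow> v i = 0"
  by (simp add: fvec_def)

lemma other_in_A:
  obtains k where "k \<in> A" "k \<noteq> j"
proof -
  have c: "card (A - {j}) \<ge> 1" using nA finA by (cases "j \<in> A") (auto simp: card_Diff_singleton)
  have "A - {j} \<noteq> {}"
  proof
    assume e: "A - {j} = {}"
    have "card (A - {j}) = 0" unfolding e by simp
    thus False using c by simp
  qed
  thus ?thesis using that by blast
qed

lemma ev_simp: "ev k i = (if i = k then 1 else 0)" by (simp add: ev_def)

lemma sum_lt2: "(\<Sum>j<2. f j) = f 0 + f (1::nat)"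
  by (simp add: numeral_2_eq_2)

lemma sum_lt3: "(\<Sum>j<3. f j) = f 0 + f 1 + f (2::nat)"
  by (simp add: numeral_3_eq_3 numeral_2_eq_2)

lemma third_alpha:
  assumes "w1 j = a * w1 j" "w1 j \<noteq> (0::'a)"
  shows "a = 1"
proof -
  have h: "w1 j = a * w1 j" using assms(1) by blast
  have "(a - 1) * w1 j = a * w1 j - w1 j" by (simp add: algebra_simps)
  also have "\<dots> = 0" by (simp add: h[symmetric])
  finally have "(a - 1) * w1 j = 0" .
  thus ?thesis using assms(2) by simp
qed

lemma split_w3:
  fixes w3 :: "nat \<Rightarrow> 'a"
  assumes cond: "3 \<le> card (UNIV::'a set) \<or> 2 \<le> card ({1..m} - C)" and w3: "w3 \<in> Delta_c m C"
  obtains t1 t2 where "t1 \<in> Delta_c m C" "t2 \<in> Delta_c m C" "\<And>i. w3 i = t1 i + t2 i"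
proof (cases "3 \<le> card (UNIV::'a set)")
  case True
  have "card {0::'a, 1} \<le> 2" by (simp add: card_insert_le_m1)
  hence "\<not> (UNIV::'a set) \<subseteq> {0, 1}" using True card_mono[of "{0::'a,1}" UNIV] by auto
  then obtain l :: 'a where l: "l \<noteq> 0" "l \<noteq> 1" by auto
  have "(\<lambda>i. l * w3 i) \<in> Delta_c m C" by (rule smult_Delta_c[OF l(1) w3])
  moreover have "(\<lambda>i. (1 - l) * w3 i) \<in> Delta_c m C" by (rule smult_Delta_c[OF _ w3]) (use l in simp)
  moreover have "\<And>i. w3 i = l * w3 i + (1 - l) * w3 i" by (simp add: algebra_simps)
  ultimately show ?thesis using that by blast
next
  case False
  hence c2: "2 \<le> card ({1..m} - C)" using cond by simp
  obtain j1 where j1: "j1 \<in> {1..m}" "j1 \<notin> C" "w3 j1 \<noteq> 0" using Delta_c_nz[OF w3] by blast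
  have "card ({1..m} - C - {j1}) \<ge> 1" using c2 j1 by (simp add: card_Diff_singleton)
  then obtain k0 where k0: "k0 \<in> {1..m}" "k0 \<notin> C" "k0 \<noteq> j1" by (metis DiffD1 DiffD2 card_0_eq ex_in_conv finite_Diff finite_atLeastAtMost insertI1 not_one_le_zero)
  have w3f: "w3 \<in> fvec m" using w3 by (simp add: Delta_c_def)
  have "(\<lambda>i. w3 i - ev k0 i) \<in> Delta_c m C"
    by (rule Delta_c_intro[of _ j1]) (use w3f k0 j1 in \<open>auto simp: fvec_def ev_def\<close>)
  moreover have "ev k0 \<in> Delta_c m C"
    by (rule Delta_c_intro[of _ k0]) (use k0 ev_fvec in \<open>auto simp: ev_def\<close>)
  moreover have "\<And>i. w3 i = (w3 i - ev k0 i) + ev k0 i" by simp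
  ultimately show ?thesis using that by blast
qed

end

context setting
begin

lemma loc2:
  assumes cond: "3 \<le> card (UNIV::'a set) \<or> 2 \<le> card ({1..m} - C)"
  shows "repairable_with Nbar 2"
  unfolding repairable_with_def
proof
  fix g assume g: "g \<in> Nbar"
  hence gN: "g \<in> N" using Nbar_sub by blast
  obtain w1 w2 w3 e where gg: "g = gen w1 w2 w3 e" and w: "w1 \<in> Delta_star m A" "w2 \<in> Delta m B" "w3 \<in> Delta_c m C"
    using N_param[OF gN] by blast
  obtain j where j: "j \<in> A" "w1 j \<noteq> 0" using Delta_star_nz[OF w(1) A] by blast
  obtain k where k: "k \<in> A" "k \<noteq> j" using other_in_A by blast
  obtain t1 t2 where t: "t1 \<in> Delta_c m C" "t2 \<in> Delta_c m C" "\<And>i. w3 i = t1 i + t2 i"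
    using split_w3[OF cond w(3)] by blast
  define a1 where "a1 = (\<lambda>i. w1 i - ev k i)"
  define h where "h n = (if n = 0 then gen a1 w2 t1 e else gen (ev k) (\<lambda>_. 0) t2 e)" for n :: nat
  have a1: "a1 \<in> Delta_star m A"
    by (rule Delta_star_intro[of _ j]) (use Delta_A_zero[OF w(1)] k j in \<open>auto simp: a1_def ev_def\<close>)
  have ek: "ev k \<in> Delta_star m A"
    by (rule Delta_star_intro[of _ k]) (auto simp: ev_def k)
  have hN: "h n \<in> N" if "n < 2" for n
    unfolding h_def using gen_N[OF a1 w(2) t(1)] gen_N[OF ek zero_Delta t(2)] by simp
  have np: "g \<noteq> smult3 a (h n)" if "n < 2" for n a
  proof
    assume eq: "g = smult3 a (h n)"
    have "snd (snd g) = snd (snd (smult3 a (h n)))" using eq by simp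
    hence th: "w1 = (\<lambda>i. a * snd (snd (h n)) i)" by (simp add: gg gen_def smult3_third)
    show False
    proof (cases "n = 0")
      case True
      have hn: "snd (snd (h n)) = a1" by (simp add: h_def gen_def True)
      have f1: "w1 j = a * a1 j" using fun_cong[OF th, of j] unfolding hn by simp
      have "a1 j = w1 j" unfolding a1_def using k by (simp add: ev_def)
      hence f2: "w1 j = a * w1 j" using f1 by simp
      have a1: "a = 1" by (rule third_alpha[of w1 j a, OF f2 j(2)])
      have e1: "w1 k = a * a1 k" using fun_cong[OF th, of k] unfolding hn by simp
      hence e1': "w1 k = a1 k" using a1 by simp
      have e2: "a1 k = w1 k - 1" by (simp add: a1_def ev_def)
      have "w1 k = w1 k - 1" using e1' e2 by (rule trans)
      thus False by (simp add: algebra_simps)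
    next
      case False
      have hn: "snd (snd (h n)) = ev k" by (simp add: h_def gen_def False)
      have "w1 j = a * ev k j" using fun_cong[OF th, of j] unfolding hn by simp
      thus False using j k by (simp add: ev_def)
    qed
  qed
  have sm: "g = ((\<lambda>i. \<Sum>n<2. fst (h n) i), (\<lambda>i. \<Sum>n<2. fst (snd (h n)) i), (\<lambda>i. \<Sum>n<2. snd (snd (h n)) i))"
  proof -
    have c1: "(\<lambda>i. \<Sum>n<2. fst (h n) i) = fst g"
      by (cases e) (simp_all add: sum_lt2 h_def gg gen_def a1_def fun_eq_iff)
    have c2: "(\<lambda>i. \<Sum>n<2. fst (snd (h n)) i) = fst (snd g)"
      by (simp add: sum_lt2 h_def gg gen_def fun_eq_iff t(3))
    have c3: "(\<lambda>i. \<Sum>n<2. snd (snd (h n)) i) = snd (snd g)"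
      by (simp add: sum_lt2 h_def gg gen_def fun_eq_iff a1_def)
    show ?thesis using c1 c2 c3 by (cases g) simp
  qed
  show "\<exists>S. S \<subseteq> Nbar - {g} \<and> card S \<le> 2 \<and> lin_comb3 S g"
    by (rule repair_from_N[OF g hN np sm])
qed

lemma loc3: "repairable_with Nbar 3"
  unfolding repairable_with_def
proof
  fix g assume g: "g \<in> Nbar"
  hence gN: "g \<in> N" using Nbar_sub by blast
  obtain w1 w2 w3 e where gg: "g = gen w1 w2 w3 e" and w: "w1 \<in> Delta_star m A" "w2 \<in> Delta m B" "w3 \<in> Delta_c m C"
    using N_param[OF gN] by blast
  obtain j where j: "j \<in> A" "w1 j \<noteq> 0" using Delta_star_nz[OF w(1) A] by blast
  obtain k where k: "k \<in> A" "k \<noteq> j" using other_in_A by blast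
  obtain c0 where c0: "c0 \<in> C" using Cne by blast
  have c0m: "c0 \<in> {1..m}" using c0 C by blast
  obtain j0 where j0: "j0 \<in> {1..m}" "j0 \<notin> C" using C Cm by blast
  have j0c0: "j0 \<noteq> c0" using j0 c0 by blast
  obtain j1 where j1: "j1 \<in> {1..m}" "j1 \<notin> C" "w3 j1 \<noteq> 0" using Delta_c_nz[OF w(3)] by blast
  have w3f: "w3 \<in> fvec m" using w(3) by (simp add: Delta_c_def)
  define h where "h n = (if n = 0 then gen w1 w2 (\<lambda>i. w3 i + ev c0 i) e
     else if n = 1 then gen (ev k) (\<lambda>_. 0) (ev j0) False
     else gen (\<lambda>i. - ev k i) (\<lambda>_. 0) (\<lambda>i. - ev j0 i - ev c0 i) False)" for n :: nat
  have t0: "(\<lambda>i. w3 i + ev c0 i) \<in> Delta_c m C"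
    by (rule Delta_c_intro[of _ j1]) (use w3f c0m j1 c0 in \<open>auto simp: fvec_def ev_def\<close>)
  have t1: "ev j0 \<in> Delta_c m C"
    by (rule Delta_c_intro[of _ j0]) (use j0 ev_fvec in \<open>auto simp: ev_def\<close>)
  have t2: "(\<lambda>i. - ev j0 i - ev c0 i) \<in> Delta_c m C"
    by (rule Delta_c_intro[of _ j0]) (use j0 j0c0 c0m in \<open>auto simp: ev_def fvec_def\<close>)
  have ek: "ev k \<in> Delta_star m A"
    by (rule Delta_star_intro[of _ k]) (auto simp: ev_def k)
  have ek': "(\<lambda>i. - ev k i) \<in> Delta_star m A"
    by (rule Delta_star_intro[of _ k]) (auto simp: ev_def k)
  have hN: "h n \<in> N" if "n < 3" for n
    unfolding h_def using gen_N[OF w(1) w(2) t0] gen_N[OF ek zero_Delta t1] gen_N[OF ek' zero_Delta t2] by simp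
  have np: "g \<noteq> smult3 a (h n)" if "n < 3" for n a
  proof
    assume eq: "g = smult3 a (h n)"
    have "snd (snd g) = snd (snd (smult3 a (h n)))" using eq by simp
    hence th: "w1 = (\<lambda>i. a * snd (snd (h n)) i)" by (simp add: gg gen_def smult3_third)
    have "fst (snd g) = fst (snd (smult3 a (h n)))" using eq by simp
    hence se: "w3 = (\<lambda>i. a * fst (snd (h n)) i)" by (simp add: gg gen_def smult3_def)
    show False
    proof (cases "n = 0")
      case True
      have hn: "snd (snd (h n)) = w1" by (simp add: h_def gen_def True)
      have f2: "w1 j = a * w1 j" using fun_cong[OF th, of j] unfolding hn by simp
      have a1: "a = 1" by (rule third_alpha[of w1 j a, OF f2 j(2)])
      have hn2: "fst (snd (h n)) = (\<lambda>i. w3 i + ev c0 i)" by (simp add: h_def gen_def True)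
      have e1: "w3 c0 = a * (w3 c0 + ev c0 c0)" using fun_cong[OF se, of c0] unfolding hn2 by simp
      hence "w3 c0 = w3 c0 + 1" using a1 by (simp add: ev_def)
      thus False by (simp add: algebra_simps)
    next
      case n0: False
      show False
      proof (cases "n = 1")
        case True
        have hn: "snd (snd (h n)) = ev k" by (simp add: h_def gen_def True)
        have "w1 j = a * ev k j" using fun_cong[OF th, of j] unfolding hn by simp
        thus False using j k by (simp add: ev_def)
      next
        case False
        have hn: "snd (snd (h n)) = (\<lambda>i. - ev k i)" using False n0 by (auto simp: h_def gen_def)
        have "w1 j = a * - ev k j" using fun_cong[OF th, of j] unfolding hn by simp
        thus False using j k by (simp add: ev_def)
      qed
    qed
  qed
  have sm: "g = ((\<lambda>i. \<Sum>n<3. fst (h n) i), (\<lambda>i. \<Sum>n<3. fst (snd (h n)) i), (\<lambda>i. \<Sum>n<3. snd (snd (h n)) i))"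
  proof -
    have c1: "(\<lambda>i. \<Sum>n<3. fst (h n) i) = fst g"
      by (cases e) (simp_all add: sum_lt3 h_def gg gen_def fun_eq_iff)
    have c2: "(\<lambda>i. \<Sum>n<3. fst (snd (h n)) i) = fst (snd g)"
      by (simp add: sum_lt3 h_def gg gen_def fun_eq_iff)
    have c3: "(\<lambda>i. \<Sum>n<3. snd (snd (h n)) i) = snd (snd g)"
      by (simp add: sum_lt3 h_def gg gen_def fun_eq_iff)
    show ?thesis using c1 c2 c3 by (cases g) simp
  qed
  show "\<exists>S. S \<subseteq> Nbar - {g} \<and> card S \<le> 3 \<and> lin_comb3 S g"
    by (rule repair_from_N[OF g hN np sm])
qed

end

context setting
begin

lemma norep_small:
  assumes g: "g \<in> Nbar" and S: "S \<subseteq> Nbar - {g}" and cS: "card S \<le> 1" and lc: "lin_comb3 S g"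
  shows False
proof -
  have gN: "g \<in> N" using g Nbar_sub by blast
  have finS: "finite S" using S finNbar finite_subset by blast
  obtain c where c: "g = ((\<lambda>i. \<Sum>s\<in>S. c s * fst s i), (\<lambda>i. \<Sum>s\<in>S. c s * fst (snd s) i), (\<lambda>i. \<Sum>s\<in>S. c s * snd (snd s) i))"
    using lc unfolding lin_comb3_def by blast
  have nz: "snd (snd g) \<noteq> (\<lambda>_. 0)" by (rule N4_nz[OF gN])
  show False
  proof (cases "card S = 0")
    case True
    hence "S = {}" using finS by simp
    hence "snd (snd g) = (\<lambda>_. 0)" using c by simp
    thus False using nz by simp
  next
    case False
    hence "card S = 1" using cS by simp
    then obtain h where Sh: "S = {h}" by (auto simp: card_1_singleton_iff)
    have hN: "h \<in> Nbar" "h \<noteq> g" using S Sh by auto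
    have gs: "g = smult3 (c h) h" using c Sh by (simp add: smult3_def)
    have ch: "c h \<noteq> 0"
    proof
      assume "c h = 0"
      hence "snd (snd g) = (\<lambda>_. 0)" using gs by (simp add: smult3_def)
      thus False using nz by simp
    qed
    have hNN: "h \<in> N" using hN Nbar_sub by blast
    have "g = h" by (rule rep_unique[OF rep hNN g ch gs hN(1) one_neq_zero smult3_one[symmetric]])
    thus False using hN by simp
  qed
qed

lemma N_nonempty: "Nbar \<noteq> {}"
proof -
  obtain k where k: "k \<in> A" using nA by (cases "A = {}") auto
  obtain j0 where j0: "j0 \<in> {1..m}" "j0 \<notin> C" using C Cm by blast
  have ek: "ev k \<in> Delta_star m A"
    by (rule Delta_star_intro[of _ k]) (auto simp: ev_def k)
  have t1: "ev j0 \<in> Delta_c m C"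
    by (rule Delta_c_intro[of _ j0]) (use j0 ev_fvec in \<open>auto simp: ev_def\<close>)
  have "gen (ev k) (\<lambda>_. 0) (ev j0) False \<in> N" by (rule gen_N[OF ek zero_Delta t1])
  then obtain y a where "y \<in> Nbar" using rep_exists[OF rep] by blast
  thus ?thesis by blast
qed

lemma norep1: "\<not> repairable_with Nbar 1"
proof
  assume r: "repairable_with Nbar 1"
  obtain g where g: "g \<in> Nbar" using N_nonempty by blast
  then obtain S where "S \<subseteq> Nbar - {g}" "card S \<le> 1" "lin_comb3 S g" using r unfolding repairable_with_def by blast
  thus False using norep_small[OF g] by blast
qed

lemma card_N_Nbar: "card N = (card (UNIV::'a set) - 1) * card Nbar"
  using orbit_count[OF rep finN N4_closed N4_nz, where Q = "\<lambda>_. True"] by simp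

end

lemma F2_cases:
  assumes "card (UNIV::'a::{finite,field} set) = 2"
  shows "(x::'a) = 0 \<or> x = 1"
proof -
  have "{0::'a, 1} \<subseteq> UNIV" by simp
  moreover have "card {0::'a, 1} = card (UNIV::'a set)" using assms by simp
  ultimately have "{0::'a, 1} = UNIV" by (intro card_subset_eq) auto
  thus ?thesis by auto
qed

lemma F2_11:
  assumes "card (UNIV::'a::{finite,field} set) = 2"
  shows "(1::'a) + 1 = 0"
proof -
  have "(1::'a) + 1 = 0 \<or> (1::'a) + 1 = 1" by (rule F2_cases[OF assms])
  moreover have "(1::'a) + 1 \<noteq> 1"
  proof
    assume h: "(1::'a) + 1 = 1"
    have "(1::'a) + 1 = 1 + 0" using h by (simp only: add_0_right)
    hence "(1::'a) = 0" by (simp only: add_left_cancel)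
    thus False by simp
  qed
  ultimately show ?thesis by blast
qed

context setting
begin

lemma norep2:
  assumes q2: "card (UNIV::'a set) = 2" and c1: "card ({1..m} - C) = 1"
  shows "\<not> repairable_with Nbar 2"
proof
  assume r: "repairable_with Nbar 2"
  obtain j0 where j0: "{1..m} - C = {j0}" using c1 by (auto simp: card_1_singleton_iff)
  have one: "fst (snd h) j0 = 1" if hN0: "h \<in> N" for h
  proof -
    obtain w1 w2 w3 e where hh: "h = gen w1 w2 w3 e" and w1: "w1 \<in> Delta_star m A" and w2: "w2 \<in> Delta m B" and w: "w3 \<in> Delta_c m C"
      by (rule N_param[OF hN0])
    obtain j1 where j1: "j1 \<in> {1..m}" "j1 \<notin> C" "w3 j1 \<noteq> 0" using Delta_c_nz[OF w] by blast
    have "j1 \<in> {1..m} - C" using j1 by blast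
    hence "j1 = j0" unfolding j0 by blast
    hence w30: "w3 j0 \<noteq> 0" using j1(3) by simp
    have "w3 j0 = 0 \<or> w3 j0 = 1" by (rule F2_cases[OF q2])
    hence "w3 j0 = 1" using w30 by blast
    thus ?thesis unfolding hh gen_def by simp
  qed
  obtain g where g: "g \<in> Nbar" using N_nonempty by blast
  then obtain S where S: "S \<subseteq> Nbar - {g}" "card S \<le> 2" "lin_comb3 S g" using r unfolding repairable_with_def by blast
  show False
  proof (cases "card S \<le> 1")
    case True thus False using norep_small[OF g S(1) _ S(3)] by blast
  next
    case False
    hence "card S = 2" using S(2) by simp
    then obtain h1 h2 where Sh: "S = {h1, h2}" "h1 \<noteq> h2" by (auto simp: card_2_iff)
    obtain c where c: "g = ((\<lambda>i. \<Sum>s\<in>S. c s * fst s i), (\<lambda>i. \<Sum>s\<in>S. c s * fst (snd s) i), (\<lambda>i. \<Sum>s\<in>S. c s * snd (snd s) i))"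
      using S(3) unfolding lin_comb3_def by blast
    have gc: "g = ((\<lambda>i. c h1 * fst h1 i + c h2 * fst h2 i), (\<lambda>i. c h1 * fst (snd h1) i + c h2 * fst (snd h2) i),
        (\<lambda>i. c h1 * snd (snd h1) i + c h2 * snd (snd h2) i))"
      using c Sh by simp
    have hN: "h1 \<in> N" "h2 \<in> N" "h1 \<in> Nbar" "h2 \<in> Nbar" "h1 \<noteq> g" "h2 \<noteq> g" using S(1) Sh Nbar_sub by auto
    have gN: "g \<in> N" using g Nbar_sub by blast
    have "fst (snd g) j0 = c h1 * fst (snd h1) j0 + c h2 * fst (snd h2) j0" by (subst gc) simp
    hence sum1: "1 = c h1 + c h2" using one[OF gN] one[OF hN(1)] one[OF hN(2)] by simp
    have F11: "(1::'a) + 1 = 0" by (rule F2_11[OF q2])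
    consider "c h1 = 0" "c h2 = 0" | "c h1 = 1" "c h2 = 1" | "c h1 = 1" "c h2 = 0" | "c h1 = 0" "c h2 = 1"
      using F2_cases[OF q2, of "c h1"] F2_cases[OF q2, of "c h2"] by blast
    thus False
    proof cases
      case 1 thus False using sum1 by simp
    next
      case 2 thus False using sum1 F11 by simp
    next
      case 3
      hence "g = h1" by (subst gc) simp
      thus False using hN by simp
    next
      case 4
      hence "g = h2" by (subst gc) simp
      thus False using hN by simp
    qed
  qed
qed

end

theorem mainTheorem19:
  fixes m :: nat and A B C :: "nat set"
    and Nbar :: "('a::{finite,field}) vec3 set"
  defines "q \<equiv> card (UNIV :: 'a set)"
  assumes "m \<ge> 2"
    and "A \<subseteq> {1..m}" and "B \<subseteq> {1..m}" and "C \<subseteq> {1..m}"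
    and "A \<noteq> {}" and "B \<noteq> {}" and "C \<noteq> {}"
    and "A \<inter> B = {}" and "C \<noteq> {1..m}" and "card A \<ge> 2"
    and "is_projective_rep (N4 m A B C) Nbar"
  shows "((q \<ge> 3 \<or> (q = 2 \<and> card ({1..m} - C) \<ge> 2)) \<longrightarrow>
            code_length Nbar = 2 * (q ^ m - q ^ card C) * (q ^ card A - 1) * q ^ card B div (q - 1)
          \<and> code_dim (code m Nbar) = m + 2 * card A + card B
          \<and> min_dist Nbar (code m Nbar) = (q ^ m - q ^ card C) * q ^ (card A + card B - 1)
          \<and> has_locality Nbar 2)
       \<and> ((q = 2 \<and> card ({1..m} - C) = 1) \<longrightarrow>
            code_length Nbar = (2 ^ card A - 1) * 2 ^ (m + card B)
          \<and> code_dim (code m Nbar) = m + 2 * card A + card B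
          \<and> min_dist Nbar (code m Nbar) = 2 ^ (m + card A + card B - 2)
          \<and> has_locality Nbar 3)"
proof -
  interpret S: setting m A B C Nbar
    by unfold_locales (use assms in auto)
  have q2: "2 \<le> q" unfolding q_def by (rule S.q2)
  have cardN: "card (N4 m A B C :: 'a vec3 set) = (q - 1) * card Nbar"
    unfolding q_def by (rule S.card_N_Nbar)
  have cardN2: "card (N4 m A B C :: 'a vec3 set) = 2 * (q ^ m - q ^ card C) * (q ^ card A - 1) * q ^ card B"
    unfolding q_def using card_N4[OF S.AB S.A S.B S.C, where 'a='a] by (simp add: ac_simps)
  have len: "code_length Nbar = 2 * (q ^ m - q ^ card C) * (q ^ card A - 1) * q ^ card B div (q - 1)"
    unfolding code_length_def cardN2[symmetric] cardN using q2 by simp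
  have dim: "code_dim (code m Nbar) = m + 2 * card A + card B" by (rule S.code_dim_eq)
  have md: "min_dist Nbar (code m Nbar) = (q ^ m - q ^ card C) * q ^ (card A + card B - 1)"
    unfolding S.min_dist_eq S.dd_def q_def ..
  have loc1: "\<forall>r'. 0 < r' \<and> r' < 2 \<longrightarrow> \<not> repairable_with Nbar r'"
    using S.norep1 by (metis One_nat_def less_2_cases not_less_zero)
  have partA: "(q \<ge> 3 \<or> (q = 2 \<and> card ({1..m} - C) \<ge> 2)) \<longrightarrow>
            code_length Nbar = 2 * (q ^ m - q ^ card C) * (q ^ card A - 1) * q ^ card B div (q - 1)
          \<and> code_dim (code m Nbar) = m + 2 * card A + card B
          \<and> min_dist Nbar (code m Nbar) = (q ^ m - q ^ card C) * q ^ (card A + card B - 1)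
          \<and> has_locality Nbar 2"
  proof
    assume cond: "q \<ge> 3 \<or> (q = 2 \<and> card ({1..m} - C) \<ge> 2)"
    have cond': "3 \<le> card (UNIV::'a set) \<or> 2 \<le> card ({1..m} - C)" using cond unfolding q_def by auto
    have "has_locality Nbar 2" unfolding has_locality_def using S.loc2[OF cond'] loc1 by simp
    thus "code_length Nbar = 2 * (q ^ m - q ^ card C) * (q ^ card A - 1) * q ^ card B div (q - 1)
          \<and> code_dim (code m Nbar) = m + 2 * card A + card B
          \<and> min_dist Nbar (code m Nbar) = (q ^ m - q ^ card C) * q ^ (card A + card B - 1)
          \<and> has_locality Nbar 2" using len dim md by simp
  qed
  have partB: "(q = 2 \<and> card ({1..m} - C) = 1) \<longrightarrow>
            code_length Nbar = (2 ^ card A - 1) * 2 ^ (m + card B)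
          \<and> code_dim (code m Nbar) = m + 2 * card A + card B
          \<and> min_dist Nbar (code m Nbar) = 2 ^ (m + card A + card B - 2)
          \<and> has_locality Nbar 3"
  proof
    assume cond: "q = 2 \<and> card ({1..m} - C) = 1"
    hence qq: "q = 2" and c1: "card ({1..m} - C) = 1" by auto
    have "card ({1..m} - C) = m - card C" using card_Diff_subset[OF finite_subset[OF S.C] S.C] by simp
    hence cC: "card C = m - 1" using c1 S.cardC_less by simp
    obtain m' where m': "m = Suc m'" using \<open>m \<ge> 2\<close> by (cases m) auto
    have p1: "(2::nat) ^ m - 2 ^ (m - 1) = 2 ^ m'" using m' by simp
    have l2: "code_length Nbar = (2 ^ card A - 1) * 2 ^ (m + card B)"
    proof -
      have "code_length Nbar = 2 * (2 ^ m - 2 ^ (m - 1)) * (2 ^ card A - 1) * 2 ^ card B"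
        using len qq cC by simp
      also have "\<dots> = (2 ^ card A - 1) * 2 ^ (m + card B)" unfolding p1 m' by (simp add: power_add ac_simps)
      finally show ?thesis .
    qed
    have md2: "min_dist Nbar (code m Nbar) = 2 ^ (m + card A + card B - 2)"
    proof -
      have "min_dist Nbar (code m Nbar) = (2 ^ m - 2 ^ (m - 1)) * 2 ^ (card A + card B - 1)"
        using md qq cC by simp
      also have "\<dots> = 2 ^ (m' + (card A + card B - 1))" unfolding p1 by (simp add: power_add)
      also have "m' + (card A + card B - 1) = m + card A + card B - 2" using m' S.nA by simp
      finally show ?thesis .
    qed
    have q2': "card (UNIV::'a set) = 2" using qq unfolding q_def .
    have "\<forall>r'. 0 < r' \<and> r' < 3 \<longrightarrow> \<not> repairable_with Nbar r'"
    proof (intro allI impI)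
      fix r' :: nat assume "0 < r' \<and> r' < 3"
      hence "r' = 1 \<or> r' = 2" by auto
      thus "\<not> repairable_with Nbar r'" using S.norep1 S.norep2[OF q2' c1] by auto
    qed
    hence "has_locality Nbar 3" unfolding has_locality_def using S.loc3 by simp
    thus "code_length Nbar = (2 ^ card A - 1) * 2 ^ (m + card B)
          \<and> code_dim (code m Nbar) = m + 2 * card A + card B
          \<and> min_dist Nbar (code m Nbar) = 2 ^ (m + card A + card B - 2)
          \<and> has_locality Nbar 3" using l2 dim md2 by simp
  qed
  show ?thesis using partA partB by blast
qed

end
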